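(* Consider a finite-horizon RMAB as in the context. (1) When a policy $\pi\in\Pi_{\delta_N}(\mathbf{y}^* )$ is applied to the $N$-system, its state trajectory $(\mathbf{X}^\pi_h)_{1\le h\le H}$ satisfies \[ \mathbb{P}\big(\|\mathbf{X}^\pi_h-\mathbf{x}^*_h\|_\infty\le z_h\delta_N\ \ \forall h\big)=1-\mathcal{O}(N^{-\log N}). \] (2) When a policy $\tilde\pi\in\Pi_{\delta_N}(\mathbf{y}^* )$ is applied to the Gaussian stochastic system, with trajectory $\tilde{\mathbf{X}}^{\tilde\pi}_h$ and actions $\mathbf{Y}_h=\tilde\pi(\tilde{\mathbf{X}}^{\tilde\pi}_h,h)$, then for $1\le h\le H-1$, \[ \mathbb{P}\Big(\tilde{\mathbf{X}}^{\tilde\pi}_{h+1}=\phi_h(\mathbf{Y}_h)+\tfrac{\mathbf{Z}_h}{\sqrt N}\ \Big|\ \|\tilde{\mathbf{X}}^{\tilde\pi}_h-\mathbf{x}^*_h\|_\infty\le z_h\delta_N\Big) =\mathbb{P}\Big(\phi_h(\mathbf{Y}_h)+\tfrac{\mathbf{Z}_h}{\sqrt N}\ge\mathbf{0}\ \Big|\ \|\tilde{\mathbf{X}}^{\tilde\pi}_h-\mathbf{x}^*_h\|_\infty\le z_h\delta_N\Big)=1-\mathcal{O}(N^{-\log N}), \] and \[ \mathbb{P}\big(\|\tilde{\mathbf{X}}^{\tilde\pi}_h-\mathbf{x}^*_h\|_\infty\le z_h\delta_N\ \ \forall h\big)=1-\mathcal{O}(N^{-\log N})\ge1-\frac{\tilde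 C}{N^{\log N}}, \] where $\tilde C>0$ is a constant independent of $N$.
   Context: RMAB ($N$-system): states $\mathcal{S}=\{1,\dots,S\}$, actions $\{0,1\}$, horizon $H$; kernels $\mathbf{P}_h(\cdot\mid s,a)$, rewards $r_h(s,a)\ge0$, $r_{\max}=\max r_h(s,a)$, $\mathbf{r}_h\in\mathbb{R}^{2S}$; budget $\alpha\in(0,1)$, $\alpha N\in\mathbb{N}$; initial state $\mathbf{x}_{\mathrm{ini}}\in\Delta^S_N=\{\mathbf{x}\in\Delta^S:N\mathbf{x}\in\mathbb{N}^S\}$. State = fractions of arms per state; action $\mathbf{y}\in\Delta^{2S}$ = fractions per state-action, feasible for $\mathbf{x}$ iff $\mathbf{y}(\cdot,0)+\mathbf{y}(\cdot,1)=\mathbf{x}$ and $\sum_sy(s,1)=\alpha$. In the $N$-system, given action $\mathbf{y}_h$, $\mathbf{X}_{h+1}=\frac1N\sum_{s,a}\mathbf{U}^{(s,a)}_h$ with independent $\mathbf{U}^{(s,a)}_h\sim\mathrm{Multinomial}(Ny_h(s,a),\mathbf{P}_h(\cdot\mid s,a))$. Fluid LP: maximize $\sum_h\mathbf{r}_h\mathbf{y}_h^\top$ s.t. $\sum_sy_h(s,1)=\alpha$, $\mathbf{y}_h(\cdot,0)+\mathbf{y}_h(\cdot,1)=\mathbf{x}_h$, $\mathbf{y}_h\ge0$, $\mathbf{x}_1=\mathbf{x}_{\mathrm{ini}}$, $\mathbf{x}_{h+1}=\phi_h(\mathbf{y}_h)$, $\phi_h(\mathbf{y})(s')=\sum_{s,a}y(s,a)\mathbf{P}_h(s'\mid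 s,a)$; $(\mathbf{x}^*,\mathbf{y}^* )$ an optimal solution; $\sigma:=\inf_{\mathbf{y}\in\mathcal{U},\mathbf{y}\ne\mathbf{y}^*}\mathbf{r}(\mathbf{y}^*-\mathbf{y})^\top/\|\mathbf{y}^*-\mathbf{y}\|_\infty$ ($\mathcal{U}$ the LP feasible set, $\mathbf{r}=(\mathbf{r}_1,\dots,\mathbf{r}_H)$). Constants: $\delta_N=2\log N/\sqrt N$, $L_h$ the $\|\cdot\|_\infty$-Lipschitz constant of $\phi_h$, $\kappa=\max\{2+6S,3+2r_{\max}HS/\sigma\}$, $z_1=1$, $z_{h+1}=\sqrt S(\kappa L_hz_h+1)$. $\Pi_{\delta_N}(\mathbf{y}^* )$: policies with $\|\pi(\mathbf{x},h)-\mathbf{y}^*_h\|_\infty\le\kappa z_h\delta_N$ whenever $\|\mathbf{x}-\mathbf{x}^*_h\|_\infty\le z_h\delta_N$, and equal to a fixed predefined policy otherwise. Gaussian stochastic system: $\tilde{\mathbf{X}}_1=\mathbf{x}_{\mathrm{ini}}$; under action $\mathbf{y}_h$, $\tilde{\mathbf{X}}_{h+1}=\mathrm{Proj}_{\Delta^S}(\phi_h(\mathbf{y}_h)+\mathbf{Z}_h/\sqrt N)$ (Euclidean projection onto the simplex), $\mathbf{Z}_h\sim\mathcal{N}(\mathbf{0},\Gamma_h(\mathbf{y}^*_h))$ independent across $h$, $\Gamma_h(\mathbf{y}^*_h)=\sum_{s,a}y^*_h(s,a)\Sigma_h(s,a)$, $\Sigma_h(s,a)_{ij}=\mathbf{P}_h(i\mid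 s,a)(\mathbf{1}[i=j]-\mathbf{P}_h(j\mid s,a))$. $\mathcal{O}(N^{-\log N})$ hides constants independent of $N$. *)

theory Defs
  imports "HOL-Analysis.Analysis" "HOL-Probability.Probability"
begin

text \<open>States: a finite type 's (so S = CARD('s)); actions: bool (True = activate = action 1).
  Kernels: P h s a :: 's pmf, i.e. P_h(s' | s,a) = pmf (P h s a) s'.\<close>

definition linf :: "real^'n \<Rightarrow> real" where
  "linf x = Max (range (\<lambda>i. \<bar>x $ i\<bar>))"

definition prob_simplex :: "(real^'n) set" where
  "prob_simplex = {x. (\<forall>i. 0 \<le> x $ i) \<and> (\<Sum>i\<in>UNIV. x $ i) = 1}"

definition simplexN :: "nat \<Rightarrow> (real^'n) set" where
  "simplexN N = {x \<in> prob_simplex. \<forall>i. real N * x $ i \<in> \<nat>}"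

definition proj_simplex :: "real^'n \<Rightarrow> real^'n" where
  "proj_simplex v = closest_point prob_simplex v"

definition feasible_action :: "real \<Rightarrow> real^'s::finite \<Rightarrow> real^('s \<times> bool) \<Rightarrow> bool" where
  "feasible_action \<alpha> x y \<longleftrightarrow> (\<forall>sa. 0 \<le> y $ sa)
     \<and> (\<forall>s. y $ (s, False) + y $ (s, True) = x $ s)
     \<and> (\<Sum>s\<in>UNIV. y $ (s, True)) = \<alpha>"

definition phi :: "(nat \<Rightarrow> 's::finite \<Rightarrow> bool \<Rightarrow> 's pmf) \<Rightarrow> nat \<Rightarrow> real^('s \<times> bool) \<Rightarrow> real^'s" where
  "phi P h y = (\<chi> s'. \<Sum>sa\<in>UNIV. y $ sa * pmf (P h (fst sa) (snd sa)) s')"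

definition lp_feasible ::
  "(nat \<Rightarrow> 's::finite \<Rightarrow> bool \<Rightarrow> 's pmf) \<Rightarrow> real \<Rightarrow> nat \<Rightarrow> real^'s
     \<Rightarrow> (nat \<Rightarrow> real^'s) \<Rightarrow> (nat \<Rightarrow> real^('s \<times> bool)) \<Rightarrow> bool" where
  "lp_feasible P \<alpha> H xini x y \<longleftrightarrow> x 1 = xini
     \<and> (\<forall>h\<in>{1..H}. feasible_action \<alpha> (x h) (y h))
     \<and> (\<forall>h\<in>{1..<H}. x (Suc h) = phi P h (y h))"

definition lp_obj :: "(nat \<Rightarrow> 's::finite \<Rightarrow> bool \<Rightarrow> real) \<Rightarrow> nat \<Rightarrow> (nat \<Rightarrow> real^('s \<times> bool)) \<Rightarrow> real" where
  "lp_obj r H y = (\<Sum>h=1..H. \<Sum>sa\<in>UNIV. r h (fst sa) (snd sa) * y h $ sa)"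

definition lp_optimal :: "(nat \<Rightarrow> 's::finite \<Rightarrow> bool \<Rightarrow> 's pmf) \<Rightarrow> (nat \<Rightarrow> 's \<Rightarrow> bool \<Rightarrow> real) \<Rightarrow> real \<Rightarrow> nat \<Rightarrow> real^'s \<Rightarrow> (nat \<Rightarrow> real^'s) \<Rightarrow> (nat \<Rightarrow> real^('s \<times> bool)) \<Rightarrow> bool" where
  "lp_optimal P r \<alpha> H xini xs ys \<longleftrightarrow> lp_feasible P \<alpha> H xini xs ys
     \<and> (\<forall>x y. lp_feasible P \<alpha> H xini x y \<longrightarrow> lp_obj r H y \<le> lp_obj r H ys)"

definition linf_seq :: "nat \<Rightarrow> (nat \<Rightarrow> real^'n) \<Rightarrow> real" where
  "linf_seq H y = Max ((\<lambda>h. linf (y h)) ` {1..H})"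

definition sigma_gap :: "(nat \<Rightarrow> 's::finite \<Rightarrow> bool \<Rightarrow> 's pmf) \<Rightarrow> (nat \<Rightarrow> 's \<Rightarrow> bool \<Rightarrow> real) \<Rightarrow> real \<Rightarrow> nat \<Rightarrow> real^'s \<Rightarrow> (nat \<Rightarrow> real^('s \<times> bool)) \<Rightarrow> real" where
  "sigma_gap P r \<alpha> H xini ys = Inf {(lp_obj r H ys - lp_obj r H y) / linf_seq H (\<lambda>h. ys h - y h) | y.
      (\<exists>x. lp_feasible P \<alpha> H xini x y) \<and> (\<exists>h\<in>{1..H}. y h \<noteq> ys h)}"

definition r_max :: "(nat \<Rightarrow> 's \<Rightarrow> bool \<Rightarrow> real) \<Rightarrow> nat \<Rightarrow> real" where
  "r_max r H = Max {r h s a | h s a. h \<in> {1..H}}"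

definition delta_N :: "nat \<Rightarrow> real" where
  "delta_N N = 2 * ln (real N) / sqrt (real N)"

definition lip :: "(nat \<Rightarrow> 's::finite \<Rightarrow> bool \<Rightarrow> 's pmf) \<Rightarrow> nat \<Rightarrow> real" where
  "lip P h = Inf {L. 0 \<le> L \<and> (\<forall>y y'. linf (phi P h y - phi P h y') \<le> L * linf (y - y'))}"

definition kappa :: "(nat \<Rightarrow> 's::finite \<Rightarrow> bool \<Rightarrow> 's pmf) \<Rightarrow> (nat \<Rightarrow> 's \<Rightarrow> bool \<Rightarrow> real) \<Rightarrow> real \<Rightarrow> nat \<Rightarrow> real^'s \<Rightarrow> (nat \<Rightarrow> real^('s \<times> bool)) \<Rightarrow> real" where
  "kappa P r \<alpha> H xini ys = max (2 + 6 * real CARD('s))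
      (3 + 2 * r_max r H * real H * real CARD('s) / sigma_gap P r \<alpha> H xini ys)"

text \<open>zz k = z_{k+1}\<close>
primrec zz :: "real \<Rightarrow> (nat \<Rightarrow> real) \<Rightarrow> nat \<Rightarrow> real \<Rightarrow> real" where
  "zz S L 0 \<kappa> = 1"
| "zz S L (Suc k) \<kappa> = sqrt S * (\<kappa> * L (Suc k) * zz S L k \<kappa> + 1)"

definition zcoef :: "(nat \<Rightarrow> 's::finite \<Rightarrow> bool \<Rightarrow> 's pmf) \<Rightarrow> (nat \<Rightarrow> 's \<Rightarrow> bool \<Rightarrow> real) \<Rightarrow> real \<Rightarrow> nat \<Rightarrow> real^'s \<Rightarrow> (nat \<Rightarrow> real^('s \<times> bool)) \<Rightarrow> nat \<Rightarrow> real" where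
  "zcoef P r \<alpha> H xini ys h =
     zz (real CARD('s)) (lip P) (h - 1) (kappa P r \<alpha> H xini ys)"

definition in_Pi_delta where
  "in_Pi_delta D H \<kappa> z \<delta> xs ys pi0 (\<pi> :: real^'s \<Rightarrow> nat \<Rightarrow> real^('s \<times> bool)) \<longleftrightarrow>
     (\<forall>h\<in>{1..H}. \<forall>x\<in>D.
        (linf (x - xs h) \<le> z h * \<delta> \<longrightarrow> linf (\<pi> x h - ys h) \<le> \<kappa> * z h * \<delta>)
      \<and> (\<not> linf (x - xs h) \<le> z h * \<delta> \<longrightarrow> \<pi> x h = pi0 x h))"

definition admissible_N where
  "admissible_N \<alpha> H N (\<pi> :: real^'s \<Rightarrow> nat \<Rightarrow> real^('s \<times> bool)) \<longleftrightarrow>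
     (\<forall>h\<in>{1..H}. \<forall>x\<in>simplexN N. feasible_action \<alpha> x (\<pi> x h) \<and> (\<forall>sa. real N * \<pi> x h $ sa \<in> \<nat>))"

definition admissible_G where
  "admissible_G \<alpha> H (\<pi> :: real^'s \<Rightarrow> nat \<Rightarrow> real^('s \<times> bool)) \<longleftrightarrow>
     (\<forall>h\<in>{1..H}. \<forall>x\<in>prob_simplex. feasible_action \<alpha> x (\<pi> x h))
     \<and> (\<forall>h. (\<lambda>x. \<pi> x h) \<in> borel_measurable borel)"

text \<open>Counts of n i.i.d. draws from p, i.e. Multinomial(n, p).\<close>
primrec multinomial_pmf :: "nat \<Rightarrow> 's pmf \<Rightarrow> ('s \<Rightarrow> nat) pmf" where
  "multinomial_pmf 0 p = return_pmf (\<lambda>_. 0)"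
| "multinomial_pmf (Suc n) p =
     bind_pmf (multinomial_pmf n p) (\<lambda>c. map_pmf (\<lambda>s. c(s := Suc (c s))) p)"

definition nstep :: "(nat \<Rightarrow> 's::finite \<Rightarrow> bool \<Rightarrow> 's pmf) \<Rightarrow> nat \<Rightarrow> nat \<Rightarrow> real^('s \<times> bool) \<Rightarrow> (real^'s) pmf" where
  "nstep P N h y =
     map_pmf (\<lambda>U. \<chi> s'. (\<Sum>sa\<in>UNIV. real (U sa s')) / real N)
       (Pi_pmf UNIV (\<lambda>_. 0)
          (\<lambda>sa. multinomial_pmf (nat \<lfloor>real N * y $ sa\<rfloor>) (P h (fst sa) (snd sa))))"

text \<open>ntraj ... k: joint law of (X_1, ..., X_{k+1}) (other entries are irrelevant).\<close>
primrec ntraj :: "(nat \<Rightarrow> 's::finite \<Rightarrow> bool \<Rightarrow> 's pmf) \<Rightarrow> nat \<Rightarrow> (real^'s \<Rightarrow> nat \<Rightarrow> real^('s \<times> bool))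
    \<Rightarrow> real^'s \<Rightarrow> nat \<Rightarrow> (nat \<Rightarrow> real^'s) pmf" where
  "ntraj P N \<pi> xini 0 = return_pmf (\<lambda>_. xini)"
| "ntraj P N \<pi> xini (Suc k) =
     bind_pmf (ntraj P N \<pi> xini k)
       (\<lambda>X. map_pmf (\<lambda>x'. X(Suc (Suc k) := x')) (nstep P N (Suc k) (\<pi> (X (Suc k)) (Suc k))))"

definition Sigma_mat :: "(nat \<Rightarrow> 's::finite \<Rightarrow> bool \<Rightarrow> 's pmf) \<Rightarrow> nat \<Rightarrow> 's \<times> bool \<Rightarrow> real^'s^'s" where
  "Sigma_mat P h sa = (\<chi> i j. pmf (P h (fst sa) (snd sa)) i *
       ((if i = j then 1 else 0) - pmf (P h (fst sa) (snd sa)) j))"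

definition Gamma_mat :: "(nat \<Rightarrow> 's::finite \<Rightarrow> bool \<Rightarrow> 's pmf) \<Rightarrow> nat \<Rightarrow> real^('s \<times> bool) \<Rightarrow> real^'s^'s" where
  "Gamma_mat P h y = (\<Sum>sa\<in>UNIV. y $ sa *\<^sub>R Sigma_mat P h sa)"

text \<open>Standard Gaussian on real^'n, and the centred Gaussian with covariance Gamma,
  realised as A w with A A^T = Gamma (the law does not depend on the choice of A).\<close>
definition std_gaussian :: "(real^'n) measure" where
  "std_gaussian = density lborel (\<lambda>w. ennreal (\<Prod>i\<in>UNIV. std_normal_density (w $ i)))"

definition gaussian :: "real^'n^'n \<Rightarrow> (real^'n) measure" where
  "gaussian \<Gamma> = distr std_gaussian borel
     (\<lambda>w. (SOME A :: real^'n^'n. A ** transpose A = \<Gamma>) *v w)"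

text \<open>Probability space of the noises Z_1, ..., Z_{H-1} (independent), omega h = Z_h.\<close>
definition gnoise_space where
  "gnoise_space P H ys =
     PiM {1..<H} (\<lambda>h. gaussian (Gamma_mat P h (ys h)))"

text \<open>gtraj ... omega h = state at time h (h \<ge> 1).\<close>
primrec gtraj :: "(nat \<Rightarrow> 's::finite \<Rightarrow> bool \<Rightarrow> 's pmf) \<Rightarrow> nat \<Rightarrow> (real^'s \<Rightarrow> nat \<Rightarrow> real^('s \<times> bool))
    \<Rightarrow> real^'s \<Rightarrow> (nat \<Rightarrow> real^'s) \<Rightarrow> nat \<Rightarrow> real^'s" where
  "gtraj P N \<pi> xini \<omega> 0 = xini"
| "gtraj P N \<pi> xini \<omega> (Suc h) =
     (if h = 0 then xini
      else proj_simplex (phi P h (\<pi> (gtraj P N \<pi> xini \<omega> h) h) + (1 / sqrt (real N)) *\<^sub>R \<omega> h))"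

end

theory Submission
  imports Defs "HOL-Real_Asymp.Real_Asymp"
begin

lemma linf_le_iff: "linf (x::real^'n) \<le> c \<longleftrightarrow> (\<forall>i. \<bar>x $ i\<bar> \<le> c)"
  unfolding linf_def by (subst Max_le_iff) auto

lemma abs_le_linf: "\<bar>(x::real^'n) $ i\<bar> \<le> linf x"
  unfolding linf_def by (rule Max_ge) auto

lemma linf_nonneg: "0 \<le> linf (x::real^'n)"
  using abs_le_linf[of x undefined] by linarith

lemma linf_zero[simp]: "linf (0::real^'n) = 0"
  using linf_le_iff[of "0::real^'n" 0] linf_nonneg[of "0::real^'n"] by auto

lemma linf_triangle: "linf ((x::real^'n) + y) \<le> linf x + linf y"
  unfolding linf_le_iff using abs_le_linf[of x] abs_le_linf[of y]
  by (metis abs_triangle_ineq add_mono order_trans vector_add_component)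

lemma linf_minus_commute: "linf ((x::real^'n) - y) = linf (y - x)"
proof -
  have "\<And>i. \<bar>(x - y) $ i\<bar> = \<bar>(y - x) $ i\<bar>" by simp
  then show ?thesis unfolding linf_def by simp
qed

lemma linf_scale: "linf (c *\<^sub>R (x::real^'n)) = \<bar>c\<bar> * linf x"
proof (rule antisym)
  show "linf (c *\<^sub>R x) \<le> \<bar>c\<bar> * linf x"
    unfolding linf_le_iff by (auto simp: abs_mult intro!: mult_left_mono abs_le_linf)
  show "\<bar>c\<bar> * linf x \<le> linf (c *\<^sub>R x)"
  proof (cases "c = 0")
    case True then show ?thesis using linf_nonneg by simp
  next
    case False
    have "linf x \<le> linf (c *\<^sub>R x) / \<bar>c\<bar>"
      unfolding linf_le_iff using False abs_le_linf[of "c *\<^sub>R x"]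
      by (auto simp: abs_mult le_divide_eq mult.commute)
    then show ?thesis using False by (simp add: le_divide_eq mult.commute)
  qed
qed

lemma linf_le_norm: "linf (x::real^'n) \<le> norm x"
  unfolding linf_le_iff by (simp add: component_le_norm_cart)

lemma norm_le_linf: "norm (x::real^'n) \<le> sqrt (real CARD('n)) * linf x"
proof -
  have "norm x = sqrt (\<Sum>i\<in>UNIV. (x $ i)\<^sup>2)" by (simp add: norm_vec_def L2_set_def)
  also have "\<dots> \<le> sqrt (\<Sum>i\<in>(UNIV::'n set). (linf x)\<^sup>2)"
    by (intro real_sqrt_le_mono sum_mono) (metis abs_le_linf abs_ge_zero power2_abs power_mono)
  also have "\<dots> = sqrt (real CARD('n)) * linf x"
    using linf_nonneg[of x] by (simp add: real_sqrt_mult)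
  finally show ?thesis .
qed

lemma convex_prob_simplex: "convex (prob_simplex :: (real^'n) set)"
  unfolding convex_def prob_simplex_def
  by (auto simp: sum.distrib sum_distrib_left[symmetric] algebra_simps)

lemma closed_prob_simplex: "closed (prob_simplex :: (real^'n) set)"
proof -
  have "prob_simplex = (\<Inter>i. {x::real^'n. 0 \<le> x $ i}) \<inter> {x. (\<Sum>i\<in>UNIV. x $ i) = 1}"
    unfolding prob_simplex_def by auto
  moreover have "closed {x::real^'n. (\<Sum>i\<in>UNIV. x $ i) = 1}"
    by (intro closed_Collect_eq continuous_intros)
  moreover have "closed {x::real^'n. 0 \<le> x $ i}" for i
    by (intro closed_Collect_le continuous_intros)
  ultimately show ?thesis by (metis closed_INT closed_Int)
qed

lemma proj_simplex_in:
  assumes "(prob_simplex :: (real^'n) set) \<noteq> {}"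
  shows "proj_simplex (v::real^'n) \<in> prob_simplex"
  unfolding proj_simplex_def by (rule closest_point_in_set[OF closed_prob_simplex assms])

lemma proj_simplex_eq_iff:
  assumes "(prob_simplex :: (real^'n) set) \<noteq> {}"
  shows "proj_simplex (v::real^'n) = v \<longleftrightarrow> v \<in> prob_simplex"
  unfolding proj_simplex_def by (rule closest_point_refl[OF closed_prob_simplex assms])

lemma proj_simplex_lip:
  assumes "(prob_simplex :: (real^'n) set) \<noteq> {}"
  shows "dist (proj_simplex (v::real^'n)) (proj_simplex w) \<le> dist v w"
  unfolding proj_simplex_def
  by (rule closest_point_lipschitz[OF convex_prob_simplex closed_prob_simplex assms])

lemma continuous_proj_simplex:
  assumes "(prob_simplex :: (real^'n) set) \<noteq> {}"
  shows "continuous_on A (proj_simplex :: real^'n \<Rightarrow> _)"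
  unfolding proj_simplex_def
  by (rule continuous_on_closest_point[OF convex_prob_simplex closed_prob_simplex assms])

lemma phi_diff: "phi P h y - phi P h y' = phi P h (y - y')"
  unfolding phi_def by (simp add: vec_eq_iff sum_subtractf[symmetric] algebra_simps)

lemma phi_add: "phi P h (y + y') = phi P h y + phi P h y'"
  unfolding phi_def by (simp add: vec_eq_iff sum.distrib algebra_simps)

lemma phi_nonneg: "(\<forall>sa. 0 \<le> y $ sa) \<Longrightarrow> 0 \<le> phi P h y $ i"
  unfolding phi_def by (auto intro!: sum_nonneg)

lemma phi_sum: "(\<Sum>i\<in>UNIV. phi P h y $ i) = (\<Sum>sa\<in>UNIV. y $ sa)"
proof -
  have "(\<Sum>i\<in>UNIV. phi P h y $ i) = (\<Sum>sa\<in>UNIV. y $ sa * (\<Sum>i\<in>UNIV. pmf (P h (fst sa) (snd sa)) i))"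
    unfolding phi_def by (simp add: sum_distrib_left) (rule sum.swap)
  also have "\<dots> = (\<Sum>sa\<in>UNIV. y $ sa)"
    by (simp add: sum_pmf_eq_1)
  finally show ?thesis .
qed

lemma phi_lip0:
  fixes P :: "nat \<Rightarrow> 's::finite \<Rightarrow> bool \<Rightarrow> 's pmf"
  shows "linf (phi P h y) \<le> real CARD('s \<times> bool) * linf y"
proof (unfold linf_le_iff, intro allI)
  fix i
  have "\<bar>phi P h y $ i\<bar> \<le> (\<Sum>sa\<in>UNIV. \<bar>y $ sa * pmf (P h (fst sa) (snd sa)) i\<bar>)"
    unfolding phi_def by (simp add: sum_abs)
  also have "\<dots> \<le> (\<Sum>sa\<in>(UNIV::('s\<times>bool) set). linf y)"
  proof (intro sum_mono)
    fix sa
    have "\<bar>y $ sa\<bar> * pmf (P h (fst sa) (snd sa)) i \<le> linf y * 1"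
      by (intro mult_mono abs_le_linf pmf_le_1 linf_nonneg) auto
    then show "\<bar>y $ sa * pmf (P h (fst sa) (snd sa)) i\<bar> \<le> linf y" by (simp add: abs_mult)
  qed
  finally show "\<bar>phi P h y $ i\<bar> \<le> real CARD('s \<times> bool) * linf y" by simp
qed

lemma lip_set_ne:
  fixes P :: "nat \<Rightarrow> 's::finite \<Rightarrow> bool \<Rightarrow> 's pmf"
  shows "{L. 0 \<le> L \<and> (\<forall>y y'. linf (phi P h y - phi P h y') \<le> L * linf (y - y'))} \<noteq> {}"
proof -
  have "\<forall>y y'. linf (phi P h y - phi P h y') \<le> real CARD('s \<times> bool) * linf (y - y')"
    using phi_lip0[of P h] by (simp add: phi_diff)
  then show ?thesis by (intro ex_in_conv[THEN iffD1] exI[of _ "real CARD('s \<times> bool)"]) auto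
qed

lemma lip_nonneg: "0 \<le> lip P h"
  unfolding lip_def by (rule cInf_greatest[OF lip_set_ne]) auto

lemma lip_works: "linf (phi P h y - phi P h y') \<le> lip P h * linf (y - y')"
proof (cases "linf (y - y') = 0")
  case True
  then have "y - y' = 0" using linf_le_iff[of "y - y'" 0] by (auto simp: vec_eq_iff)
  then show ?thesis by (simp add: phi_diff[symmetric])
next
  case False
  then have pos: "0 < linf (y - y')" using linf_nonneg[of "y-y'"] by auto
  have "linf (phi P h y - phi P h y') / linf (y - y') \<le> lip P h"
    unfolding lip_def
  proof (rule cInf_greatest[OF lip_set_ne], safe)
    fix L assume "0 \<le> L" "\<forall>y y'. linf (phi P h y - phi P h y') \<le> L * linf (y - y')"
    then show "linf (phi P h y - phi P h y') / linf (y - y') \<le> L"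
      using pos by (simp add: divide_le_eq)
  qed
  then show ?thesis using pos by (simp add: divide_le_eq mult.commute)
qed

lemma feasible_sum:
  assumes "feasible_action \<alpha> x y" "x \<in> prob_simplex"
  shows "(\<Sum>sa\<in>UNIV. y $ sa) = 1"
proof -
  have "(\<Sum>s\<in>UNIV. \<Sum>b\<in>UNIV. y $ (s, b)) = (\<Sum>sa\<in>UNIV \<times> UNIV. y $ sa)"
    by (simp add: sum.cartesian_product)
  then have "(\<Sum>sa\<in>UNIV. y $ sa) = (\<Sum>s\<in>UNIV. \<Sum>b\<in>UNIV. y $ (s, b))"
    by simp
  also have "\<dots> = (\<Sum>s\<in>UNIV. x $ s)"
    using assms(1) unfolding feasible_action_def by (simp add: UNIV_bool add.commute)
  finally show ?thesis using assms(2) by (simp add: prob_simplex_def)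
qed

lemma phi_simplex:
  assumes "feasible_action \<alpha> x y" "x \<in> prob_simplex"
  shows "phi P h y \<in> prob_simplex"
  using assms feasible_sum[OF assms] phi_nonneg[of y]
  unfolding prob_simplex_def feasible_action_def by (simp add: phi_sum)


lemma xs_simplex:
  assumes "lp_feasible P \<alpha> H xini xs ys" "xini \<in> prob_simplex" "h \<in> {1..H}"
  shows "xs h \<in> prob_simplex"
  using assms(3)
proof (induction h)
  case 0 then show ?case by simp
next
  case (Suc h)
  show ?case
  proof (cases "h = 0")
    case True then show ?thesis using assms(1,2) by (simp add: lp_feasible_def)
  next
    case False
    then have h: "h \<in> {1..<H}" "h \<in> {1..H}" using Suc.prems by auto
    then have "xs h \<in> prob_simplex" using Suc.IH by auto
    moreover have "feasible_action \<alpha> (xs h) (ys h)" "xs (Suc h) = phi P h (ys h)"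
      using assms(1) h unfolding lp_feasible_def by auto
    ultimately show ?thesis using phi_simplex by metis
  qed
qed

lemma ys_nonneg:
  assumes "lp_feasible P \<alpha> H xini xs ys" "h \<in> {1..H}"
  shows "0 \<le> ys h $ sa"
  using assms unfolding lp_feasible_def feasible_action_def by (cases sa) fastforce

lemma ys_sum:
  assumes "lp_feasible P \<alpha> H xini xs ys" "xini \<in> prob_simplex" "h \<in> {1..H}"
  shows "(\<Sum>sa\<in>UNIV. ys h $ sa) = 1"
  using assms xs_simplex[OF assms] feasible_sum unfolding lp_feasible_def by metis

lemma xs_next:
  assumes "lp_feasible P \<alpha> H xini xs ys" "h \<in> {1..<H}"
  shows "xs (Suc h) = phi P h (ys h)"
  using assms unfolding lp_feasible_def by auto

lemma kappa_ge: "2 + 6 * real CARD('s) \<le> kappa P r \<alpha> H xini (ys :: nat \<Rightarrow> real^('s::finite \<times> bool))"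
  unfolding kappa_def by simp

lemma kappa_nonneg: "0 \<le> kappa P r \<alpha> H xini (ys :: nat \<Rightarrow> real^('s::finite \<times> bool))"
  using kappa_ge[of P r \<alpha> H xini ys] by linarith

lemma zz_ge1: "0 \<le> \<kappa> \<Longrightarrow> 1 \<le> S \<Longrightarrow> (\<And>k. 0 \<le> L k) \<Longrightarrow> 1 \<le> zz S L k \<kappa>"
proof (induction k)
  case 0 then show ?case by simp
next
  case (Suc k)
  have "1 \<le> sqrt S" using Suc.prems by simp
  moreover have "1 \<le> \<kappa> * L (Suc k) * zz S L k \<kappa> + 1"
    using Suc by (simp add: mult_nonneg_nonneg)
  ultimately have "1 * 1 \<le> sqrt S * (\<kappa> * L (Suc k) * zz S L k \<kappa> + 1)"
    by (intro mult_mono) auto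
  then show ?case by simp
qed

lemma zcoef_ge1: "1 \<le> zcoef P r \<alpha> H xini (ys :: nat \<Rightarrow> real^('s::finite \<times> bool)) h"
  unfolding zcoef_def
  by (intro zz_ge1 kappa_nonneg lip_nonneg) auto

lemma zcoef_Suc:
  assumes "1 \<le> h"
  shows "zcoef P r \<alpha> H xini (ys :: nat \<Rightarrow> real^('s::finite \<times> bool)) (Suc h)
    = sqrt (real CARD('s)) * (kappa P r \<alpha> H xini ys * lip P h * zcoef P r \<alpha> H xini ys h + 1)"
  using assms unfolding zcoef_def by (cases h) auto

lemma delta_N_nonneg: "1 \<le> N \<Longrightarrow> 0 \<le> delta_N N"
  unfolding delta_N_def by simp

lemma step_phi:
  assumes "in_Pi_delta D H \<kappa> z \<delta> xs ys pi0 \<pi>" "X \<in> D" "h \<in> {1..<H}"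
    "linf (X - xs h) \<le> z h * \<delta>" "xs (Suc h) = phi P h (ys h)"
  shows "linf (phi P h (\<pi> X h) - xs (Suc h)) \<le> lip P h * (\<kappa> * z h * \<delta>)"
proof -
  have "linf (\<pi> X h - ys h) \<le> \<kappa> * z h * \<delta>"
    using assms(1-4) unfolding in_Pi_delta_def by auto
  then show ?thesis using lip_works[of P h "\<pi> X h" "ys h"] lip_nonneg[of P h] assms(5)
    by (metis mult_left_mono order_trans)
qed

lemma stepN:
  fixes P :: "nat \<Rightarrow> 's::finite \<Rightarrow> bool \<Rightarrow> 's pmf"
  assumes "in_Pi_delta D H \<kappa> z \<delta> xs ys pi0 \<pi>" "X \<in> D" "h \<in> {1..<H}"
    "linf (X - xs h) \<le> z h * \<delta>" "xs (Suc h) = phi P h (ys h)"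
    "linf (X' - phi P h (\<pi> X h)) \<le> \<delta>" "0 \<le> \<delta>" "0 \<le> \<kappa>" "0 \<le> z h"
  shows "linf (X' - xs (Suc h)) \<le> sqrt (real CARD('s)) * (\<kappa> * lip P h * z h + 1) * \<delta>"
proof -
  have "linf (X' - xs (Suc h)) \<le> linf (X' - phi P h (\<pi> X h)) + linf (phi P h (\<pi> X h) - xs (Suc h))"
    using linf_triangle[of "X' - phi P h (\<pi> X h)" "phi P h (\<pi> X h) - xs (Suc h)"] by simp
  also have "\<dots> \<le> \<delta> + lip P h * (\<kappa> * z h * \<delta>)"
    using step_phi[OF assms(1-5)] assms(6) by simp
  also have "\<dots> = 1 * ((\<kappa> * lip P h * z h + 1) * \<delta>)" by (simp add: algebra_simps)
  also have "\<dots> \<le> sqrt (real CARD('s)) * ((\<kappa> * lip P h * z h + 1) * \<delta>)"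
    using assms(7-9) lip_nonneg[of P h]
    by (intro mult_right_mono) (auto intro!: mult_nonneg_nonneg)
  finally show ?thesis by (simp add: mult.assoc)
qed

lemma stepG:
  fixes P :: "nat \<Rightarrow> 's::finite \<Rightarrow> bool \<Rightarrow> 's pmf"
  assumes "in_Pi_delta D H \<kappa> z \<delta> xs ys pi0 \<pi>" "X \<in> D" "h \<in> {1..<H}"
    "linf (X - xs h) \<le> z h * \<delta>" "xs (Suc h) = phi P h (ys h)"
    "linf w \<le> \<delta>" "xs (Suc h) \<in> prob_simplex"
  shows "linf (proj_simplex (phi P h (\<pi> X h) + w) - xs (Suc h))
     \<le> sqrt (real CARD('s)) * (\<kappa> * lip P h * z h + 1) * \<delta>"
proof -
  let ?v = "phi P h (\<pi> X h) + w"
  have ne: "(prob_simplex :: (real^'s) set) \<noteq> {}" using assms(7) by auto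
  have "linf (proj_simplex ?v - xs (Suc h)) \<le> norm (proj_simplex ?v - xs (Suc h))"
    by (rule linf_le_norm)
  also have "\<dots> = dist (proj_simplex ?v) (proj_simplex (xs (Suc h)))"
    using assms(7) proj_simplex_eq_iff[OF ne, of "xs (Suc h)"] by (simp add: dist_norm)
  also have "\<dots> \<le> dist ?v (xs (Suc h))" by (rule proj_simplex_lip[OF ne])
  also have "\<dots> \<le> sqrt (real CARD('s)) * linf (?v - xs (Suc h))"
    unfolding dist_norm by (rule norm_le_linf)
  also have "linf (?v - xs (Suc h)) \<le> linf w + linf (phi P h (\<pi> X h) - xs (Suc h))"
    using linf_triangle[of w "phi P h (\<pi> X h) - xs (Suc h)"] by (simp add: algebra_simps)
  also have "\<dots> \<le> \<delta> + lip P h * (\<kappa> * z h * \<delta>)"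
    using step_phi[OF assms(1-5)] assms(6) by simp
  finally show ?thesis by (simp add: algebra_simps mult_left_mono)
qed


lemma bern_mgf:
  "(\<integral>\<^sup>+ s. ennreal (exp (l * ((if s = s' then 1 else 0) - pmf p s'))) \<partial>measure_pmf p)
     \<le> ennreal (exp (l\<^sup>2 / 8))"
proof -
  have E: "measure_pmf.expectation p (\<lambda>s. if s = s' then 1 else 0) = pmf p s'"
  proof -
    have "(\<lambda>s. if s = s' then 1 else 0::real) = indicator {s'}" by (auto simp: indicator_def fun_eq_iff)
    then show ?thesis using measure_pmf_single[of p s'] by simp
  qed
  consider "l > 0" | "l < 0" | "l = 0" by linarith
  then show ?thesis
  proof cases
    case 1
    interpret interval_bounded_random_variable "measure_pmf p" "\<lambda>s. if s = s' then 1 else (0::real)" 0 1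
      by unfold_locales auto
    show ?thesis using Hoeffdings_lemma_nn_integral[OF 1] by (simp add: E)
  next
    case 2
    interpret interval_bounded_random_variable "measure_pmf p" "\<lambda>s. - (if s = s' then 1 else (0::real))" "-1" 0
      by unfold_locales auto
    have "(\<integral>\<^sup>+ s. ennreal (exp ((-l) * ((- (if s = s' then 1 else 0)) -
            measure_pmf.expectation p (\<lambda>s. - (if s = s' then 1 else (0::real)))))) \<partial>measure_pmf p)
          \<le> ennreal (exp ((-l)\<^sup>2 * (0 - (-1))\<^sup>2 / 8))"
      using 2 by (intro Hoeffdings_lemma_nn_integral) auto
    then show ?thesis by (simp add: E algebra_simps)
  next
    case 3
    then show ?thesis by (simp add: measure_pmf.emeasure_space_1)
  qed
qed

lemma multinomial_mgf:
  "(\<integral>\<^sup>+ c. ennreal (exp (l * (real (c s') - real n * pmf p s'))) \<partial>measure_pmf (multinomial_pmf n p))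
     \<le> ennreal (exp (real n * l\<^sup>2 / 8))"
proof (induction n)
  case 0
  then show ?case by simp
next
  case (Suc n)
  let ?q = "pmf p s'"
  have eq: "exp (l * (real ((c(s := Suc (c s))) s') - real (Suc n) * ?q))
      = exp (l * (real (c s') - real n * ?q)) * exp (l * ((if s = s' then 1 else 0) - ?q))" for c :: "'a \<Rightarrow> nat" and s
    by (simp add: exp_add[symmetric] algebra_simps)
  have "(\<integral>\<^sup>+ c. ennreal (exp (l * (real (c s') - real (Suc n) * ?q))) \<partial>measure_pmf (multinomial_pmf (Suc n) p))
      = (\<integral>\<^sup>+ c. (\<integral>\<^sup>+ s. ennreal (exp (l * (real (c s') - real n * ?q))) *
            ennreal (exp (l * ((if s = s' then 1 else 0) - ?q))) \<partial>measure_pmf p) \<partial>measure_pmf (multinomial_pmf n p))"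
    apply (simp only: multinomial_pmf.simps nn_integral_bind_pmf nn_integral_map_pmf)
    apply (intro nn_integral_cong)
    apply (subst eq, rule ennreal_mult')
    apply simp
    done
  also have "\<dots> = (\<integral>\<^sup>+ c. ennreal (exp (l * (real (c s') - real n * ?q))) *
            (\<integral>\<^sup>+ s. ennreal (exp (l * ((if s = s' then 1 else 0) - ?q))) \<partial>measure_pmf p) \<partial>measure_pmf (multinomial_pmf n p))"
    by (simp add: nn_integral_cmult)
  also have "\<dots> \<le> (\<integral>\<^sup>+ c. ennreal (exp (l * (real (c s') - real n * ?q))) * ennreal (exp (l\<^sup>2 / 8))
            \<partial>measure_pmf (multinomial_pmf n p))"
    by (intro nn_integral_mono mult_left_mono bern_mgf) auto
  also have "\<dots> = (\<integral>\<^sup>+ c. ennreal (exp (l * (real (c s') - real n * ?q))) \<partial>measure_pmf (multinomial_pmf n p))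
            * ennreal (exp (l\<^sup>2 / 8))"
    by (simp add: nn_integral_multc)
  also have "\<dots> \<le> ennreal (exp (real n * l\<^sup>2 / 8)) * ennreal (exp (l\<^sup>2 / 8))"
    by (intro mult_right_mono Suc.IH) auto
  also have "\<dots> = ennreal (exp (real (Suc n) * l\<^sup>2 / 8))"
    by (simp add: ennreal_mult'[symmetric] exp_add[symmetric] algebra_simps add_divide_distrib)
  finally show ?case .
qed

lemma multinomial_sum:
  "c \<in> set_pmf (multinomial_pmf n (p :: 's::finite pmf)) \<Longrightarrow> (\<Sum>s\<in>UNIV. c s) = n"
proof (induction n arbitrary: c)
  case 0 then show ?case by simp
next
  case (Suc n)
  then obtain c0 s where c0: "c0 \<in> set_pmf (multinomial_pmf n p)" and c: "c = c0(s := Suc (c0 s))"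
    by auto
  have "(\<Sum>s'\<in>UNIV. c s') = (\<Sum>s'\<in>UNIV. c0 s' + (if s' = s then 1 else 0))"
    unfolding c by (intro sum.cong) auto
  also have "\<dots> = Suc n" using Suc.IH[OF c0] by (simp add: sum.distrib)
  finally show ?case .
qed

lemma (in prob_space) subgauss_tail_ge:
  assumes f[measurable]: "f \<in> borel_measurable M" and K: "0 < K" and t: "0 < t"
    and mgf: "\<And>l. (\<integral>\<^sup>+x. ennreal (exp (l * f x)) \<partial>M) \<le> ennreal (exp (K * l\<^sup>2 / 8))"
  shows "prob {x\<in>space M. t \<le> f x} \<le> exp (- 2 * t\<^sup>2 / K)"
proof -
  define s where "s = 4 * t / K"
  have s: "0 < s" using K t by (simp add: s_def)
  have "emeasure M {x\<in>space M. t \<le> f x}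
      \<le> ennreal (exp (-s * t)) * (\<integral>\<^sup>+x. ennreal (exp (s * f x)) * indicator (space M) x \<partial>M)"
    by (rule Chernoff_ineq_nn_integral_ge[OF s]) auto
  also have "(\<integral>\<^sup>+x. ennreal (exp (s * f x)) * indicator (space M) x \<partial>M) = (\<integral>\<^sup>+x. ennreal (exp (s * f x)) \<partial>M)"
    by (intro nn_integral_cong) auto
  also have "ennreal (exp (-s * t)) * \<dots> \<le> ennreal (exp (-s * t)) * ennreal (exp (K * s\<^sup>2 / 8))"
    by (intro mult_left_mono mgf) auto
  also have "\<dots> = ennreal (exp (- 2 * t\<^sup>2 / K))"
  proof -
    have "-s * t + K * s\<^sup>2 / 8 = - 2 * t\<^sup>2 / K" using K
      by (simp add: s_def power2_eq_square field_simps)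
    then show ?thesis by (simp add: ennreal_mult'[symmetric] exp_add[symmetric])
  qed
  finally show ?thesis by (simp add: emeasure_eq_measure)
qed

lemma (in prob_space) subgauss_tail:
  assumes f[measurable]: "f \<in> borel_measurable M" and K: "0 < K" and t: "0 \<le> t"
    and mgf: "\<And>l. (\<integral>\<^sup>+x. ennreal (exp (l * f x)) \<partial>M) \<le> ennreal (exp (K * l\<^sup>2 / 8))"
  shows "prob {x\<in>space M. t < \<bar>f x\<bar>} \<le> 2 * exp (- 2 * t\<^sup>2 / K)"
proof (cases "t = 0")
  case True
  have "prob {x\<in>space M. t < \<bar>f x\<bar>} \<le> 1" by (rule prob_le_1)
  moreover have "1 \<le> 2 * exp (- 2 * t\<^sup>2 / K)" using True by simp
  ultimately show ?thesis by linarith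
next
  case False
  then have t': "0 < t" using t by simp
  have mgf': "(\<integral>\<^sup>+x. ennreal (exp (l * (- f x))) \<partial>M) \<le> ennreal (exp (K * l\<^sup>2 / 8))" for l
    using mgf[of "-l"] by simp
  have "prob {x\<in>space M. t < \<bar>f x\<bar>} \<le> prob ({x\<in>space M. t \<le> f x} \<union> {x\<in>space M. t \<le> - f x})"
    by (intro finite_measure_mono) auto
  also have "\<dots> \<le> prob {x\<in>space M. t \<le> f x} + prob {x\<in>space M. t \<le> - f x}"
    by (intro measure_subadditive) (auto simp: emeasure_eq_measure)
  also have "\<dots> \<le> exp (- 2 * t\<^sup>2 / K) + exp (- 2 * t\<^sup>2 / K)"
    by (intro add_mono subgauss_tail_ge[OF _ K t'] mgf mgf') auto
  finally show ?thesis by simp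
qed

lemma real_nat_floor_Nats: "x \<in> \<nat> \<Longrightarrow> real (nat \<lfloor>x\<rfloor>) = x"
  by (auto elim!: Nats_cases)

lemma ennreal_prod_mono:
  fixes f g :: "'a \<Rightarrow> ennreal"
  shows "finite A \<Longrightarrow> (\<And>i. i \<in> A \<Longrightarrow> f i \<le> g i) \<Longrightarrow> prod f A \<le> prod g A"
  by (induction A rule: finite_induct) (auto intro!: mult_mono)

lemma nstep_mgf:
  fixes P :: "nat \<Rightarrow> 's::finite \<Rightarrow> bool \<Rightarrow> 's pmf" and y :: "real^('s \<times> bool)" and N :: nat and h :: nat and s' :: 's
  defines "n \<equiv> \<lambda>sa. nat \<lfloor>real N * y $ sa\<rfloor>"
  defines "q \<equiv> \<lambda>sa. pmf (P h (fst sa) (snd sa)) s'"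
  defines "Q \<equiv> Pi_pmf UNIV (\<lambda>_. 0) (\<lambda>sa. multinomial_pmf (n sa) (P h (fst sa) (snd sa)))"
  shows "(\<integral>\<^sup>+U. ennreal (exp (l * (\<Sum>sa\<in>UNIV. real (U sa s') - real (n sa) * q sa))) \<partial>measure_pmf Q)
     \<le> ennreal (exp (real (\<Sum>sa\<in>UNIV. n sa) * l\<^sup>2 / 8))"
proof -
  have "(\<integral>\<^sup>+U. ennreal (exp (l * (\<Sum>sa\<in>UNIV. real (U sa s') - real (n sa) * q sa))) \<partial>measure_pmf Q)
      = (\<integral>\<^sup>+U. (\<Prod>sa\<in>UNIV. ennreal (exp (l * (real (U sa s') - real (n sa) * q sa)))) \<partial>measure_pmf Q)"
    by (simp add: sum_distrib_left exp_sum prod_ennreal)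
  also have "\<dots> = (\<Prod>sa\<in>UNIV. (\<integral>\<^sup>+c. ennreal (exp (l * (real (c s') - real (n sa) * q sa)))
        \<partial>measure_pmf (multinomial_pmf (n sa) (P h (fst sa) (snd sa)))))"
    unfolding Q_def by (rule nn_integral_prod_Pi_pmf) simp
  also have "\<dots> \<le> (\<Prod>sa\<in>UNIV. ennreal (exp (real (n sa) * l\<^sup>2 / 8)))"
    by (intro ennreal_prod_mono) (auto simp: q_def intro!: multinomial_mgf)
  also have "\<dots> = ennreal (exp (real (\<Sum>sa\<in>UNIV. n sa) * l\<^sup>2 / 8))"
    by (simp add: prod_ennreal exp_sum[symmetric] sum_divide_distrib[symmetric] sum_distrib_right)
  finally show ?thesis .
qed

lemma nstep_tail1:
  fixes P :: "nat \<Rightarrow> 's::finite \<Rightarrow> bool \<Rightarrow> 's pmf" and y :: "real^('s \<times> bool)"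
  assumes N: "1 \<le> N" and yN: "\<forall>sa. real N * y $ sa \<in> \<nat>" and ysum: "(\<Sum>sa\<in>UNIV. y $ sa) = 1"
    and \<delta>: "0 \<le> \<delta>"
  shows "measure_pmf.prob (nstep P N h y) {X'. \<delta> < \<bar>(X' - phi P h y) $ s'\<bar>} \<le> 2 * exp (- 2 * real N * \<delta>\<^sup>2)"
proof -
  define n where "n = (\<lambda>sa. nat \<lfloor>real N * y $ sa\<rfloor>)"
  define q where "q = (\<lambda>sa. pmf (P h (fst sa) (snd sa)) s')"
  define Q where "Q = Pi_pmf UNIV (\<lambda>_. 0) (\<lambda>sa. multinomial_pmf (n sa) (P h (fst sa) (snd sa)))"
  define f where "f = (\<lambda>U. \<Sum>sa\<in>UNIV. real (U sa s') - real (n sa) * q sa)"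
  have nreal: "real (n sa) = real N * y $ sa" for sa
    unfolding n_def using yN real_nat_floor_Nats by metis
  have nsum: "real (\<Sum>sa\<in>UNIV. n sa) = real N"
    by (simp add: nreal sum_distrib_left[symmetric] ysum)
  have phi_eq: "phi P h y $ s' = (\<Sum>sa\<in>UNIV. real (n sa) * q sa) / real N"
    using N by (simp add: phi_def nreal q_def sum_divide_distrib)
  have "nstep P N h y = map_pmf (\<lambda>U. \<chi> s'. (\<Sum>sa\<in>UNIV. real (U sa s')) / real N) Q"
    unfolding nstep_def Q_def n_def ..
  then have "measure_pmf.prob (nstep P N h y) {X'. \<delta> < \<bar>(X' - phi P h y) $ s'\<bar>}
      = measure_pmf.prob Q {U. \<delta> < \<bar>(\<Sum>sa\<in>UNIV. real (U sa s')) / real N - phi P h y $ s'\<bar>}"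
    by simp
  also have "{U. \<delta> < \<bar>(\<Sum>sa\<in>UNIV. real (U sa s')) / real N - phi P h y $ s'\<bar>}
      = {U \<in> space (measure_pmf Q). real N * \<delta> < \<bar>f U\<bar>}"
  proof -
    have "\<bar>(\<Sum>sa\<in>UNIV. real (U sa s')) / real N - phi P h y $ s'\<bar> = \<bar>f U\<bar> / real N" for U
      using N unfolding phi_eq f_def by (simp add: sum_subtractf diff_divide_distrib[symmetric])
    then show ?thesis using N by (auto simp: field_simps)
  qed
  also have "measure_pmf.prob Q \<dots> \<le> 2 * exp (- 2 * (real N * \<delta>)\<^sup>2 / real N)"
  proof (rule measure_pmf.subgauss_tail)
    show "0 < real N" using N by simp
    show "0 \<le> real N * \<delta>" using \<delta> by simp
    show "(\<integral>\<^sup>+x. ennreal (exp (l * f x)) \<partial>measure_pmf Q) \<le> ennreal (exp (real N * l\<^sup>2 / 8))" for l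
      using nstep_mgf[where N=N and y=y and P=P and h=h and s'=s' and l=l] unfolding f_def Q_def n_def q_def nsum[unfolded n_def] .
  qed simp
  also have "2 * exp (- 2 * (real N * \<delta>)\<^sup>2 / real N) = 2 * exp (- 2 * real N * \<delta>\<^sup>2)"
    using N by (simp add: power2_eq_square)
  finally show ?thesis .
qed

lemma nstep_tail:
  fixes P :: "nat \<Rightarrow> 's::finite \<Rightarrow> bool \<Rightarrow> 's pmf" and y :: "real^('s \<times> bool)"
  assumes N: "1 \<le> N" and yN: "\<forall>sa. real N * y $ sa \<in> \<nat>" and ysum: "(\<Sum>sa\<in>UNIV. y $ sa) = 1"
    and \<delta>: "0 \<le> \<delta>"
  shows "measure_pmf.prob (nstep P N h y) {X'. \<not> linf (X' - phi P h y) \<le> \<delta>}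
     \<le> real CARD('s) * (2 * exp (- 2 * real N * \<delta>\<^sup>2))"
proof -
  have "{X'. \<not> linf (X' - phi P h y) \<le> \<delta>} = (\<Union>s'\<in>UNIV. {X'. \<delta> < \<bar>(X' - phi P h y) $ s'\<bar>})"
    by (auto simp: linf_le_iff not_le)
  then have "measure_pmf.prob (nstep P N h y) {X'. \<not> linf (X' - phi P h y) \<le> \<delta>}
     \<le> (\<Sum>s'\<in>UNIV. measure_pmf.prob (nstep P N h y) {X'. \<delta> < \<bar>(X' - phi P h y) $ s'\<bar>})"
    by (simp add: measure_pmf.finite_measure_subadditive_finite)
  also have "\<dots> \<le> (\<Sum>s'\<in>(UNIV::'s set). 2 * exp (- 2 * real N * \<delta>\<^sup>2))"
    by (intro sum_mono nstep_tail1 assms)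
  finally show ?thesis by simp
qed

lemma nstep_support:
  fixes P :: "nat \<Rightarrow> 's::finite \<Rightarrow> bool \<Rightarrow> 's pmf" and y :: "real^('s \<times> bool)"
  assumes N: "1 \<le> N" and yN: "\<forall>sa. real N * y $ sa \<in> \<nat>" and ysum: "(\<Sum>sa\<in>UNIV. y $ sa) = 1"
    and X': "X' \<in> set_pmf (nstep P N h y)"
  shows "X' \<in> simplexN N"
proof -
  define n where "n = (\<lambda>sa. nat \<lfloor>real N * y $ sa\<rfloor>)"
  have nreal: "real (n sa) = real N * y $ sa" for sa
    unfolding n_def using yN real_nat_floor_Nats by metis
  have nsum: "real (\<Sum>sa\<in>UNIV. n sa) = real N"
    by (simp add: nreal sum_distrib_left[symmetric] ysum)
  obtain U where U: "U \<in> set_pmf (Pi_pmf UNIV (\<lambda>_. 0) (\<lambda>sa. multinomial_pmf (n sa) (P h (fst sa) (snd sa))))"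
    and X'U: "X' = (\<chi> s'. (\<Sum>sa\<in>UNIV. real (U sa s')) / real N)"
    using X' unfolding nstep_def n_def by auto
  have Usa: "U sa \<in> set_pmf (multinomial_pmf (n sa) (P h (fst sa) (snd sa)))" for sa
    using U by (cases sa) (auto simp: set_Pi_pmf PiE_dflt_def)
  have cnt: "(\<Sum>s'\<in>UNIV. U sa s') = n sa" for sa
    using multinomial_sum[OF Usa] .
  have "(\<Sum>s'\<in>UNIV. X' $ s') = (\<Sum>sa\<in>UNIV. \<Sum>s'\<in>UNIV. real (U sa s')) / real N"
    unfolding X'U by (simp add: sum_divide_distrib[symmetric]) (rule disjI2, rule sum.swap)
  also have "\<dots> = 1" using N by (simp add: of_nat_sum[symmetric] cnt nsum del: of_nat_sum)
  finally have s1: "(\<Sum>s'\<in>UNIV. X' $ s') = 1" .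
  have "real N * X' $ s' = real (\<Sum>sa\<in>UNIV. U sa s')" for s'
    unfolding X'U using N by simp
  moreover have "(\<Sum>x\<in>UNIV. real (U x s')) \<in> \<nat>" for s'
    by (simp add: of_nat_sum[symmetric] del: of_nat_sum)
  ultimately show ?thesis using s1 unfolding simplexN_def prob_simplex_def X'U
    by (auto intro!: sum_nonneg divide_nonneg_nonneg)
qed

lemma emeasure_bind_pmf: "emeasure (measure_pmf (bind_pmf M f)) A = (\<integral>\<^sup>+x. emeasure (measure_pmf (f x)) A \<partial>measure_pmf M)"
proof -
  have "emeasure (measure_pmf (bind_pmf M f)) A = (\<integral>\<^sup>+y. indicator A y \<partial>measure_pmf (bind_pmf M f))"
    by simp
  also have "\<dots> = (\<integral>\<^sup>+x. \<integral>\<^sup>+y. indicator A y \<partial>measure_pmf (f x) \<partial>measure_pmf M)"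
    by (rule nn_integral_bind_pmf)
  finally show ?thesis by simp
qed

lemma ntraj_support:
  fixes P :: "nat \<Rightarrow> 's::finite \<Rightarrow> bool \<Rightarrow> 's pmf"
  assumes N: "1 \<le> N" and adm: "admissible_N \<alpha> H N \<pi>" and xini: "xini \<in> simplexN N"
  shows "k < H \<Longrightarrow> X \<in> set_pmf (ntraj P N \<pi> xini k) \<Longrightarrow> \<forall>h\<in>{1..Suc k}. X h \<in> simplexN N"
proof (induction k arbitrary: X)
  case 0 then show ?case using xini by auto
next
  case (Suc k)
  then obtain X0 x' where X0: "X0 \<in> set_pmf (ntraj P N \<pi> xini k)"
    and x': "x' \<in> set_pmf (nstep P N (Suc k) (\<pi> (X0 (Suc k)) (Suc k)))"
    and X: "X = X0(Suc (Suc k) := x')" by auto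
  have IH: "\<forall>h\<in>{1..Suc k}. X0 h \<in> simplexN N" using Suc.IH[OF _ X0] Suc.prems by simp
  then have xk: "X0 (Suc k) \<in> simplexN N" by simp
  have hk: "Suc k \<in> {1..H}" using Suc.prems by simp
  have fa: "feasible_action \<alpha> (X0 (Suc k)) (\<pi> (X0 (Suc k)) (Suc k))"
    and nat: "\<forall>sa. real N * \<pi> (X0 (Suc k)) (Suc k) $ sa \<in> \<nat>"
    using adm hk xk unfolding admissible_N_def by auto
  have "(\<Sum>sa\<in>UNIV. \<pi> (X0 (Suc k)) (Suc k) $ sa) = 1"
    using feasible_sum[OF fa] xk by (simp add: simplexN_def)
  then have "x' \<in> simplexN N" using nstep_support[OF N nat _ x'] by simp
  then show ?case using IH X by (auto simp: le_Suc_eq)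
qed

lemma ntraj_bad:
  fixes P :: "nat \<Rightarrow> 's::finite \<Rightarrow> bool \<Rightarrow> 's pmf"
  assumes N: "1 \<le> N" and adm: "admissible_N \<alpha> H N \<pi>" and xini: "xini \<in> simplexN N"
    and Pi: "in_Pi_delta (simplexN N) H \<kappa> z \<delta> xs ys pi0 \<pi>"
    and \<delta>: "0 \<le> \<delta>" and \<kappa>: "0 \<le> \<kappa>" and z: "\<And>h. 0 \<le> z h"
    and zS: "\<And>h. h \<in> {1..<H} \<Longrightarrow> z (Suc h) = sqrt (real CARD('s)) * (\<kappa> * lip P h * z h + 1)"
    and xsS: "\<And>h. h \<in> {1..<H} \<Longrightarrow> xs (Suc h) = phi P h (ys h)"
    and xs1: "xs 1 = xini"
  defines "\<epsilon> \<equiv> real CARD('s) * (2 * exp (- 2 * real N * \<delta>\<^sup>2))"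
  shows "k < H \<Longrightarrow> emeasure (measure_pmf (ntraj P N \<pi> xini k))
            {X. \<not> (\<forall>h\<in>{1..Suc k}. linf (X h - xs h) \<le> z h * \<delta>)} \<le> ennreal (real k * \<epsilon>)"
proof (induction k)
  case 0
  have "{X. \<not> (\<forall>h\<in>{1..Suc 0}. linf (X h - xs h) \<le> z h * \<delta>)} = {X. \<not> linf (X 1 - xs 1) \<le> z 1 * \<delta>}"
    by auto
  then show ?case using xs1 z[of 1] \<delta> by simp
next
  case (Suc k)
  let ?G = "\<lambda>k X. \<forall>h\<in>{1..Suc k}. linf (X h - xs h) \<le> z h * \<delta>"
  let ?M = "ntraj P N \<pi> xini k"
  let ?f = "\<lambda>X. nstep P N (Suc k) (\<pi> (X (Suc k)) (Suc k))"
  have eps: "0 \<le> \<epsilon>" unfolding \<epsilon>_def by simp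
  have pt: "emeasure (measure_pmf (map_pmf (\<lambda>x'. X(Suc (Suc k) := x')) (?f X))) {X. \<not> ?G (Suc k) X}
      \<le> indicator {X. \<not> ?G k X} X + ennreal \<epsilon>" if X: "X \<in> set_pmf ?M" for X
  proof (cases "?G k X")
    case False
    then show ?thesis by (simp add: measure_pmf.emeasure_le_1 add_increasing2)
  next
    case True
    have supp: "\<forall>h\<in>{1..Suc k}. X h \<in> simplexN N"
      using ntraj_support[OF N adm xini _ X] Suc.prems by simp
    then have xk: "X (Suc k) \<in> simplexN N" by simp
    have hk: "Suc k \<in> {1..H}" "Suc k \<in> {1..<H}" using Suc.prems by auto
    have fa: "feasible_action \<alpha> (X (Suc k)) (\<pi> (X (Suc k)) (Suc k))"
      and nat: "\<forall>sa. real N * \<pi> (X (Suc k)) (Suc k) $ sa \<in> \<nat>"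
      using adm hk xk unfolding admissible_N_def by auto
    have sum1: "(\<Sum>sa\<in>UNIV. \<pi> (X (Suc k)) (Suc k) $ sa) = 1"
      using feasible_sum[OF fa] xk by (simp add: simplexN_def)
    have sub: "(\<lambda>x'. X(Suc (Suc k) := x')) -` {X. \<not> ?G (Suc k) X}
        \<subseteq> {x'. \<not> linf (x' - phi P (Suc k) (\<pi> (X (Suc k)) (Suc k))) \<le> \<delta>}"
    proof (intro subsetI, simp only: vimage_eq mem_Collect_eq, rule notI)
      fix x' assume bad: "\<not> ?G (Suc k) (X(Suc (Suc k) := x'))"
        and ok: "linf (x' - phi P (Suc k) (\<pi> (X (Suc k)) (Suc k))) \<le> \<delta>"
      have "linf (x' - xs (Suc (Suc k))) \<le> sqrt (real CARD('s)) * (\<kappa> * lip P (Suc k) * z (Suc k) + 1) * \<delta>"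
        using True by (intro stepN[OF Pi xk hk(2) _ xsS[OF hk(2)] ok \<delta> \<kappa> z]) auto
      then have "linf (x' - xs (Suc (Suc k))) \<le> z (Suc (Suc k)) * \<delta>"
        using zS[OF hk(2)] by simp
      then have l: "linf (x' - xs (Suc (Suc k))) \<le> z (Suc (Suc k)) * \<delta>" .
      have "?G (Suc k) (X(Suc (Suc k) := x'))"
      proof
        fix h assume "h \<in> {1..Suc (Suc k)}"
        then consider "h = Suc (Suc k)" | "h \<in> {1..Suc k}" by fastforce
        then show "linf ((X(Suc (Suc k) := x')) h - xs h) \<le> z h * \<delta>"
          using l True by cases auto
      qed
      then show False using bad by simp
    qed
    have "emeasure (measure_pmf (map_pmf (\<lambda>x'. X(Suc (Suc k) := x')) (?f X))) {X. \<not> ?G (Suc k) X}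
        \<le> emeasure (measure_pmf (?f X)) {x'. \<not> linf (x' - phi P (Suc k) (\<pi> (X (Suc k)) (Suc k))) \<le> \<delta>}"
      by (simp only: emeasure_map_pmf) (intro emeasure_mono sub, simp)
    also have "\<dots> \<le> ennreal \<epsilon>"
      unfolding measure_pmf.emeasure_eq_measure \<epsilon>_def
      by (intro ennreal_leI nstep_tail[OF N nat sum1 \<delta>])
    finally show ?thesis by (simp add: add_increasing)
  qed
  have "emeasure (measure_pmf (ntraj P N \<pi> xini (Suc k))) {X. \<not> ?G (Suc k) X}
      = (\<integral>\<^sup>+X. emeasure (measure_pmf (map_pmf (\<lambda>x'. X(Suc (Suc k) := x')) (?f X))) {X. \<not> ?G (Suc k) X} \<partial>measure_pmf ?M)"
    by (simp only: ntraj.simps emeasure_bind_pmf)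
  also have "\<dots> \<le> (\<integral>\<^sup>+X. indicator {X. \<not> ?G k X} X + ennreal \<epsilon> \<partial>measure_pmf ?M)"
    apply (rule nn_integral_mono_AE)
    apply (subst AE_measure_pmf_iff)
    apply (rule ballI)
    apply (erule pt)
    done
  also have "\<dots> = emeasure (measure_pmf ?M) {X. \<not> ?G k X} + ennreal \<epsilon>"
    by (simp add: nn_integral_add measure_pmf.emeasure_space_1)
  also have "\<dots> \<le> ennreal (real k * \<epsilon>) + ennreal \<epsilon>"
    using Suc by (intro add_right_mono) simp
  also have "\<dots> = ennreal (real (Suc k) * \<epsilon>)"
    using eps by (simp add: ennreal_plus[symmetric] algebra_simps del: ennreal_plus)
  finally show ?case .
qed


lemma gram_sqrt:
  fixes u :: "'k::finite \<Rightarrow> real^'n"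
  shows "\<exists>A::real^'n^'n. \<forall>i j. (A ** transpose A) $ i $ j = (\<Sum>m\<in>UNIV. u m $ i * u m $ j)"
proof -
  define b where "b = (\<lambda>i. (\<chi> m. u m $ i) :: real^'k)"
  have G: "(\<Sum>m\<in>UNIV. u m $ i * u m $ j) = b i \<bullet> b j" for i j
    by (simp add: b_def inner_vec_def)
  define V where "V = span (range b)"
  have "subspace V" unfolding V_def by simp
  then obtain B where B: "B \<subseteq> V" "pairwise orthogonal B" "\<And>x. x \<in> B \<Longrightarrow> norm x = 1"
    "independent B" "card B = dim V" "span B = V"
    using orthonormal_basis_subspace[OF \<open>subspace V\<close>] by metis
  have finB: "finite B" using B(4) by (rule independent_imp_finite)
  have "card B \<le> card (range b)"
    unfolding B(5) V_def dim_span by (rule dim_le_card) (auto intro: span_base)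
  also have "\<dots> \<le> CARD('n)" by (rule card_image_le) simp
  finally obtain \<iota> :: "real^'k \<Rightarrow> 'n" where \<iota>: "inj_on \<iota> B" using card_le_inj[OF finB finite, of "UNIV :: 'n set"] by blast
  define A where "A = (\<chi> i l. if l \<in> \<iota> ` B then b i \<bullet> the_inv_into B \<iota> l else 0)"
  have "(A ** transpose A) $ i $ j = b i \<bullet> b j" for i j
  proof -
    have "(A ** transpose A) $ i $ j = (\<Sum>l\<in>UNIV. A $ i $ l * A $ j $ l)"
      by (simp add: matrix_matrix_mult_def transpose_def)
    also have "\<dots> = (\<Sum>l\<in>\<iota> ` B. (b i \<bullet> the_inv_into B \<iota> l) * (b j \<bullet> the_inv_into B \<iota> l))"
      by (rule sum.mono_neutral_cong_right) (auto simp: A_def)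
    also have "\<dots> = (\<Sum>e\<in>B. (b i \<bullet> e) * (b j \<bullet> e))"
      using \<iota> by (simp add: sum.reindex the_inv_into_f_f)
    also have "\<dots> = b i \<bullet> (\<Sum>e\<in>B. (b j \<bullet> e) *\<^sub>R e)"
      by (simp add: inner_sum_right mult.commute)
    also have "(\<Sum>e\<in>B. (b j \<bullet> e) *\<^sub>R e) = b j"
    proof (rule orthonormal_basis_expand[OF B(2) B(3) _ finB])
      show "b j \<in> span B" unfolding B(6) V_def by (simp add: span_base)
    qed
    finally show ?thesis .
  qed
  then show ?thesis using G by auto
qed

lemma Gamma_entry: "Gamma_mat P h y $ i $ j = (\<Sum>sa\<in>UNIV. y $ sa * Sigma_mat P h sa $ i $ j)"
  unfolding Gamma_mat_def by (simp add: sum_component)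

lemma Sigma_sum:
  fixes p :: "'s::finite pmf"
  shows "(\<Sum>k\<in>UNIV. pmf p k * ((if k = i then 1 else 0) - pmf p i) * ((if k = j then 1 else 0) - pmf p j))
    = pmf p i * ((if i = j then 1 else 0) - pmf p j)"
proof -
  have s1: "(\<Sum>k\<in>UNIV. pmf p k) = 1" by (simp add: sum_pmf_eq_1)
  have "(\<Sum>k\<in>UNIV. pmf p k * ((if k = i then 1 else 0) - pmf p i) * ((if k = j then 1 else 0) - pmf p j))
     = (\<Sum>k\<in>UNIV. pmf p k * (if k = i then 1 else 0) * (if k = j then 1 else 0))
       - pmf p j * (\<Sum>k\<in>UNIV. pmf p k * (if k = i then 1 else 0))
       - pmf p i * (\<Sum>k\<in>UNIV. pmf p k * (if k = j then 1 else 0))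
       + pmf p i * pmf p j * (\<Sum>k\<in>UNIV. pmf p k)"
    by (simp add: algebra_simps sum.distrib sum_subtractf sum_distrib_left)
  also have "\<dots> = pmf p i * ((if i = j then 1 else 0) - pmf p j)"
    using s1 by (simp add: if_distrib[of "\<lambda>x. _ * x"] algebra_simps cong: if_cong)
  finally show ?thesis .
qed

lemma Gamma_sqrt:
  fixes P :: "nat \<Rightarrow> 's::finite \<Rightarrow> bool \<Rightarrow> 's pmf"
  assumes y: "\<And>sa. 0 \<le> y $ sa"
  shows "\<exists>A::real^'s^'s. A ** transpose A = Gamma_mat P h y"
proof -
  define pv where "pv = (\<lambda>sa. (\<chi> i. pmf (P h (fst sa) (snd sa)) i) :: real^'s)"
  define u where "u = (\<lambda>(sa, k). sqrt (y $ sa * pmf (P h (fst sa) (snd sa)) k) *\<^sub>R (axis k 1 - pv sa))"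
  obtain A :: "real^'s^'s" where A: "\<And>i j. (A ** transpose A) $ i $ j = (\<Sum>m\<in>UNIV. u m $ i * u m $ j)"
    using gram_sqrt[of u] by blast
  have "(A ** transpose A) $ i $ j = Gamma_mat P h y $ i $ j" for i j
  proof -
    have "(\<Sum>m\<in>UNIV. u m $ i * u m $ j) = (\<Sum>sa\<in>UNIV. \<Sum>k\<in>UNIV. u (sa, k) $ i * u (sa, k) $ j)"
    proof -
      have "(\<Sum>sa\<in>UNIV. \<Sum>k\<in>UNIV. u (sa, k) $ i * u (sa, k) $ j) = (\<Sum>m\<in>UNIV \<times> UNIV. u m $ i * u m $ j)"
        by (simp add: sum.cartesian_product)
      then show ?thesis by simp
    qed
    also have "\<dots> = (\<Sum>sa\<in>UNIV. y $ sa * (\<Sum>k\<in>UNIV. pmf (P h (fst sa) (snd sa)) k *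
        ((if k = i then 1 else 0) - pmf (P h (fst sa) (snd sa)) i) * ((if k = j then 1 else 0) - pmf (P h (fst sa) (snd sa)) j)))"
    proof (intro sum.cong refl)
      fix sa
      have "u (sa, k) $ i * u (sa, k) $ j = y $ sa * (pmf (P h (fst sa) (snd sa)) k *
        ((if k = i then 1 else 0) - pmf (P h (fst sa) (snd sa)) i) * ((if k = j then 1 else 0) - pmf (P h (fst sa) (snd sa)) j))" for k
      proof -
        let ?p = "P h (fst sa) (snd sa)"
        let ?a = "y $ sa * pmf ?p k"
        have a: "sqrt ?a * sqrt ?a = ?a" using y[of sa] by simp
        have ui: "u (sa, k) $ i' = sqrt ?a * ((if k = i' then 1 else 0) - pmf ?p i')" for i'
          by (simp add: u_def pv_def axis_def)
        have "u (sa, k) $ i * u (sa, k) $ j = (sqrt ?a * sqrt ?a) * (((if k = i then 1 else 0) - pmf ?p i) * ((if k = j then 1 else 0) - pmf ?p j))"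
          by (simp only: ui mult_ac)
        then show ?thesis by (simp only: a mult_ac)
      qed
      then show "(\<Sum>k\<in>UNIV. u (sa, k) $ i * u (sa, k) $ j) = y $ sa * (\<Sum>k\<in>UNIV. pmf (P h (fst sa) (snd sa)) k *
        ((if k = i then 1 else 0) - pmf (P h (fst sa) (snd sa)) i) * ((if k = j then 1 else 0) - pmf (P h (fst sa) (snd sa)) j))"
        by (simp add: sum_distrib_left)
    qed
    also have "\<dots> = Gamma_mat P h y $ i $ j"
      unfolding Gamma_entry Sigma_sum by (simp add: Sigma_mat_def)
    finally show ?thesis using A by simp
  qed
  then show ?thesis by (auto simp: vec_eq_iff)
qed


lemma Basis_vec_real: "(Basis :: (real^'n) set) = range (\<lambda>i. axis i 1)"
  by (auto simp: Basis_vec_def)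

lemma vec_lborel_prod:
  fixes g :: "'n::finite \<Rightarrow> real \<Rightarrow> ennreal"
  assumes [measurable]: "\<And>i. g i \<in> borel_measurable borel"
  shows "(\<integral>\<^sup>+w. (\<Prod>i\<in>UNIV. g i (w $ i)) \<partial>(lborel :: (real^'n) measure)) = (\<Prod>i\<in>UNIV. \<integral>\<^sup>+x. g i x \<partial>lborel)"
proof -
  have inj: "inj (\<lambda>i::'n. axis i (1::real))" by (auto simp: inj_def axis_eq_axis)
  have eq: "(\<Prod>b\<in>(Basis :: (real^'n) set). F b) = (\<Prod>i\<in>UNIV. F (axis i 1))" for F :: "real^'n \<Rightarrow> ennreal"
    unfolding Basis_vec_real using inj by (simp add: prod.reindex)
  have "(\<integral>\<^sup>+x. (\<Prod>b\<in>Basis. g (axis_index b) (x \<bullet> b)) \<partial>(lborel :: (real^'n) measure)) = (\<Prod>b\<in>(Basis :: (real^'n) set). (\<integral>\<^sup>+x. g (axis_index b) x \<partial>lborel))"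
    by (subst nn_integral_lborel_prod) auto
  then show ?thesis unfolding eq by (simp add: inner_axis)
qed

lemma normal_mgf:
  "(\<integral>\<^sup>+x. ennreal (std_normal_density x * exp (c * x)) \<partial>lborel) = ennreal (exp (c\<^sup>2 / 2))"
proof -
  have "std_normal_density x * exp (c * x) = exp (c\<^sup>2 / 2) * normal_density c 1 x" for x
  proof -
    have "- x\<^sup>2 / 2 + c * x = c\<^sup>2 / 2 + - (x - c)\<^sup>2 / 2" by (simp add: power2_eq_square field_simps)
    then show ?thesis unfolding normal_density_def
      by (simp add: exp_add[symmetric] mult.commute mult.left_commute)
  qed
  then have "(\<integral>\<^sup>+x. ennreal (std_normal_density x * exp (c * x)) \<partial>lborel)
      = (\<integral>\<^sup>+x. ennreal (exp (c\<^sup>2 / 2)) * ennreal (normal_density c 1 x) \<partial>lborel)"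
    by (simp add: ennreal_mult)
  also have "\<dots> = ennreal (exp (c\<^sup>2 / 2)) * (\<integral>\<^sup>+x. ennreal (normal_density c 1 x) \<partial>lborel)"
    by (rule nn_integral_cmult) simp
  also have "(\<integral>\<^sup>+x. ennreal (normal_density c 1 x) \<partial>lborel) = 1"
    by (subst nn_integral_eq_integral) auto
  finally show ?thesis by simp
qed

lemma std_gaussian_mgf:
  fixes a :: "real^'n"
  shows "(\<integral>\<^sup>+w. ennreal (exp (l * (a \<bullet> w))) \<partial>std_gaussian) = ennreal (exp (l\<^sup>2 * (a \<bullet> a) / 2))"
proof -
  have "(\<integral>\<^sup>+w. ennreal (exp (l * (a \<bullet> w))) \<partial>std_gaussian)
      = (\<integral>\<^sup>+w. ennreal (\<Prod>i\<in>UNIV. std_normal_density (w $ i)) * ennreal (exp (l * (a \<bullet> w))) \<partial>lborel)"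
    unfolding std_gaussian_def by (rule nn_integral_density) auto
  also have "\<dots> = (\<integral>\<^sup>+w. (\<Prod>i\<in>UNIV. ennreal (std_normal_density (w $ i) * exp ((l * a $ i) * w $ i))) \<partial>lborel)"
  proof (intro nn_integral_cong)
    fix w :: "real^'n"
    have "ennreal (\<Prod>i\<in>UNIV. std_normal_density (w $ i)) * ennreal (exp (l * (a \<bullet> w)))
        = ennreal ((\<Prod>i\<in>UNIV. std_normal_density (w $ i)) * exp (l * (a \<bullet> w)))"
      by (rule ennreal_mult[symmetric]) (auto intro: prod_nonneg)
    also have "(\<Prod>i\<in>UNIV. std_normal_density (w $ i)) * exp (l * (a \<bullet> w))
        = (\<Prod>i\<in>UNIV. std_normal_density (w $ i) * exp ((l * a $ i) * w $ i))"
      by (simp add: inner_vec_def sum_distrib_left exp_sum prod.distrib mult.assoc)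
    also have "ennreal \<dots> = (\<Prod>i\<in>UNIV. ennreal (std_normal_density (w $ i) * exp ((l * a $ i) * w $ i)))"
      by (rule prod_ennreal[symmetric]) auto
    finally show "ennreal (\<Prod>i\<in>UNIV. std_normal_density (w $ i)) * ennreal (exp (l * (a \<bullet> w)))
        = (\<Prod>i\<in>UNIV. ennreal (std_normal_density (w $ i) * exp ((l * a $ i) * w $ i)))" .
  qed
  also have "\<dots> = (\<Prod>i\<in>UNIV. \<integral>\<^sup>+x. ennreal (std_normal_density x * exp ((l * a $ i) * x)) \<partial>lborel)"
    by (rule vec_lborel_prod) simp
  also have "\<dots> = (\<Prod>i\<in>UNIV. ennreal (exp ((l * a $ i)\<^sup>2 / 2)))"
    by (simp add: normal_mgf)
  also have "\<dots> = ennreal (exp (l\<^sup>2 * (a \<bullet> a) / 2))"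
    by (simp add: prod_ennreal exp_sum[symmetric] inner_vec_def sum_divide_distrib[symmetric]
        sum_distrib_left power2_eq_square algebra_simps)
  finally show ?thesis .
qed

lemma prob_space_std_gaussian: "prob_space (std_gaussian :: (real^'n) measure)"
proof
  have "emeasure (std_gaussian :: (real^'n) measure) (space std_gaussian)
      = (\<integral>\<^sup>+w. ennreal (exp (0 * ((0::real^'n) \<bullet> w))) \<partial>std_gaussian)"
    by (simp add: nn_integral_const)
  also have "\<dots> = 1" by (subst std_gaussian_mgf) simp
  finally show "emeasure (std_gaussian :: (real^'n) measure) (space std_gaussian) = 1" .
qed

lemma sets_std_gaussian[measurable_cong, simp]: "sets (std_gaussian :: (real^'n) measure) = sets borel"
  by (simp add: std_gaussian_def)

lemma space_std_gaussian[simp]: "space (std_gaussian :: (real^'n) measure) = UNIV"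
  by (simp add: std_gaussian_def)

lemma borel_measurable_vec_nth[measurable]: "(\<lambda>x::real^'n. x $ i) \<in> borel_measurable borel"
  by (intro borel_measurable_continuous_onI continuous_intros)

lemma measurable_mat_vec[measurable]: "(\<lambda>w. (A::real^'n^'m) *v w) \<in> borel_measurable borel"
  by (intro borel_measurable_continuous_onI linear_continuous_on matrix_vector_mul_linear[THEN linear_conv_bounded_linear[THEN iffD1]])

lemma prob_space_gaussian: "prob_space (gaussian (G :: real^'n^'n))"
  unfolding gaussian_def
  by (intro prob_space.prob_space_distr prob_space_std_gaussian) simp

lemma sets_gaussian[measurable_cong, simp]: "sets (gaussian (G :: real^'n^'n)) = sets borel"
  unfolding gaussian_def by simp

lemma space_gaussian[simp]: "space (gaussian (G :: real^'n^'n)) = UNIV"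
  unfolding gaussian_def by simp

lemma gaussian_comp_mgf:
  fixes G :: "real^'n^'n"
  defines "A \<equiv> (SOME A :: real^'n^'n. A ** transpose A = G)"
  shows "(\<integral>\<^sup>+v. ennreal (exp (l * v $ i)) \<partial>gaussian G) = ennreal (exp (l\<^sup>2 * (A $ i \<bullet> A $ i) / 2))"
proof -
  have "(\<integral>\<^sup>+v. ennreal (exp (l * v $ i)) \<partial>gaussian G) = (\<integral>\<^sup>+w. ennreal (exp (l * (A *v w) $ i)) \<partial>std_gaussian)"
    unfolding gaussian_def A_def by (subst nn_integral_distr) auto
  also have "\<dots> = (\<integral>\<^sup>+w. ennreal (exp (l * (A $ i \<bullet> w))) \<partial>std_gaussian)"
    by (simp add: matrix_vector_mult_def inner_vec_def)
  also have "\<dots> = ennreal (exp (l\<^sup>2 * (A $ i \<bullet> A $ i) / 2))" by (rule std_gaussian_mgf)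
  finally show ?thesis .
qed

lemma gaussian_tail:
  fixes G :: "real^'n^'n"
  defines "A \<equiv> (SOME A :: real^'n^'n. A ** transpose A = G)"
  assumes small: "A $ i \<bullet> A $ i \<le> 1 / 4" and t: "0 \<le> t"
  shows "measure (gaussian G) {v. t < \<bar>v $ i\<bar>} \<le> 2 * exp (- 2 * t\<^sup>2)"
proof -
  interpret prob_space "gaussian G" by (rule prob_space_gaussian)
  have "prob {v \<in> space (gaussian G). t < \<bar>v $ i\<bar>} \<le> 2 * exp (- 2 * t\<^sup>2 / 1)"
  proof (rule subgauss_tail)
    show "(\<integral>\<^sup>+x. ennreal (exp (l * x $ i)) \<partial>gaussian G) \<le> ennreal (exp (1 * l\<^sup>2 / 8))" for l
    proof -
      have "l\<^sup>2 * (A $ i \<bullet> A $ i) / 2 \<le> l\<^sup>2 * (1/4) / 2"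
        using small by (intro divide_right_mono mult_left_mono) auto
      then show ?thesis unfolding gaussian_comp_mgf A_def[symmetric] by (intro ennreal_leI) simp
    qed
  qed (use t in auto)
  then show ?thesis by simp
qed


lemma Gamma_diag: "Gamma_mat P h y $ i $ i = (\<Sum>sa\<in>UNIV. y $ sa * (pmf (P h (fst sa) (snd sa)) i * (1 - pmf (P h (fst sa) (snd sa)) i)))"
  by (simp add: Gamma_entry Sigma_mat_def)

lemma Gamma_total:
  fixes P :: "nat \<Rightarrow> 's::finite \<Rightarrow> bool \<Rightarrow> 's pmf"
  shows "(\<Sum>i\<in>UNIV. \<Sum>j\<in>UNIV. Gamma_mat P h y $ i $ j) = 0"
proof -
  have inner0: "(\<Sum>i\<in>UNIV. \<Sum>j\<in>UNIV. pmf p i * ((if i = j then 1 else 0) - pmf p j)) = 0" for p :: "'s pmf"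
  proof -
    have s1: "(\<Sum>i\<in>UNIV. pmf p i) = 1" by (simp add: sum_pmf_eq_1)
    have "(\<Sum>i\<in>UNIV. \<Sum>j\<in>UNIV. pmf p i * ((if i = j then 1 else 0) - pmf p j))
        = (\<Sum>i\<in>UNIV. pmf p i - pmf p i * (\<Sum>j\<in>UNIV. pmf p j))"
      by (simp add: algebra_simps sum_subtractf sum_distrib_left if_distrib[of "\<lambda>x. _ * x"] cong: if_cong)
    also have "\<dots> = 0" using s1 by simp
    finally show ?thesis .
  qed
  have "(\<Sum>i\<in>UNIV. \<Sum>j\<in>UNIV. Gamma_mat P h y $ i $ j)
      = (\<Sum>sa\<in>UNIV. y $ sa * (\<Sum>i\<in>UNIV. \<Sum>j\<in>UNIV. Sigma_mat P h sa $ i $ j))"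
    by (simp add: Gamma_entry sum_distrib_left) (subst sum.swap, rule sum.cong, simp, subst sum.swap, simp)
  also have "\<dots> = 0" by (simp add: Sigma_mat_def inner0)
  finally show ?thesis .
qed

lemma gamma_A_props:
  fixes P :: "nat \<Rightarrow> 's::finite \<Rightarrow> bool \<Rightarrow> 's pmf" and y :: "real^('s \<times> bool)" and h :: nat
  assumes y: "\<And>sa. 0 \<le> y $ sa" and ysum: "(\<Sum>sa\<in>UNIV. y $ sa) = 1"
  defines "A \<equiv> (SOME A :: real^'s^'s. A ** transpose A = Gamma_mat P h y)"
  shows "A ** transpose A = Gamma_mat P h y"
    and "\<And>i. A $ i \<bullet> A $ i \<le> 1 / 4"
    and "\<And>w. (\<Sum>i\<in>UNIV. (A *v w) $ i) = 0"
    and "\<And>i. phi P h y $ i = 0 \<Longrightarrow> A $ i = 0"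
proof -
  show AA: "A ** transpose A = Gamma_mat P h y"
    unfolding A_def using Gamma_sqrt[OF y, of P h] by (rule someI_ex)
  have diag: "A $ i \<bullet> A $ i = Gamma_mat P h y $ i $ i" for i
    unfolding AA[symmetric] by (simp add: matrix_matrix_mult_def transpose_def inner_vec_def)
  show "A $ i \<bullet> A $ i \<le> 1 / 4" for i
  proof -
    have "Gamma_mat P h y $ i $ i \<le> (\<Sum>sa\<in>UNIV. y $ sa * (1 / 4))"
      unfolding Gamma_diag
    proof (intro sum_mono mult_left_mono y)
      fix sa
      show "pmf (P h (fst sa) (snd sa)) i * (1 - pmf (P h (fst sa) (snd sa)) i) \<le> 1 / 4"
        using zero_le_power2[of "pmf (P h (fst sa) (snd sa)) i - 1/2"]
        by (simp add: power2_eq_square algebra_simps)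
    qed
    also have "\<dots> = (\<Sum>sa\<in>UNIV. y $ sa) * (1 / 4)" by (rule sum_distrib_right[symmetric])
    also have "\<dots> = 1 / 4" using ysum by simp
    finally show ?thesis using diag by simp
  qed
  have col: "(\<Sum>i\<in>UNIV. A $ i $ l) = 0" for l
  proof -
    have "(\<Sum>i\<in>UNIV. \<Sum>j\<in>UNIV. Gamma_mat P h y $ i $ j) = (\<Sum>i\<in>UNIV. \<Sum>j\<in>UNIV. \<Sum>l\<in>UNIV. A $ i $ l * A $ j $ l)"
      unfolding AA[symmetric] by (simp add: matrix_matrix_mult_def transpose_def)
    also have "\<dots> = (\<Sum>i\<in>UNIV. \<Sum>l\<in>UNIV. \<Sum>j\<in>UNIV. A $ i $ l * A $ j $ l)"
      by (rule sum.cong[OF refl], rule sum.swap)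
    also have "\<dots> = (\<Sum>l\<in>UNIV. \<Sum>i\<in>UNIV. \<Sum>j\<in>UNIV. A $ i $ l * A $ j $ l)"
      by (rule sum.swap)
    also have "\<dots> = (\<Sum>l\<in>UNIV. (\<Sum>i\<in>UNIV. A $ i $ l)\<^sup>2)"
      by (simp add: power2_eq_square sum_product)
    finally have "(\<Sum>i\<in>UNIV. \<Sum>j\<in>UNIV. Gamma_mat P h y $ i $ j) = (\<Sum>l\<in>UNIV. (\<Sum>i\<in>UNIV. A $ i $ l)\<^sup>2)" .
    then have "(\<Sum>l\<in>UNIV. (\<Sum>i\<in>UNIV. A $ i $ l)\<^sup>2) = 0" using Gamma_total[of P h y] by simp
    then have "\<forall>l\<in>UNIV. (\<Sum>i\<in>UNIV. A $ i $ l)\<^sup>2 = 0"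
      by (subst sum_nonneg_eq_0_iff[symmetric]) auto
    then show ?thesis by simp
  qed
  show "(\<Sum>i\<in>UNIV. (A *v w) $ i) = 0" for w
  proof -
    have "(\<Sum>i\<in>UNIV. (A *v w) $ i) = (\<Sum>l\<in>UNIV. w $ l * (\<Sum>i\<in>UNIV. A $ i $ l))"
      by (simp add: matrix_vector_mult_def sum_distrib_left mult.commute) (rule sum.swap)
    then show ?thesis by (simp add: col)
  qed
  show "A $ i = 0" if phi0: "phi P h y $ i = 0" for i
  proof -
    have "\<forall>sa\<in>UNIV. y $ sa * pmf (P h (fst sa) (snd sa)) i = 0"
      using phi0 unfolding phi_def by (subst sum_nonneg_eq_0_iff[symmetric]) (auto simp: y)
    then have "Gamma_mat P h y $ i $ i = 0" unfolding Gamma_diag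
      by (intro sum.neutral ballI) (metis mult.assoc mult_zero_left)
    then have "A $ i \<bullet> A $ i = 0" using diag by simp
    then show ?thesis by simp
  qed
qed

lemma range_closed_mat: "closed (range (\<lambda>w. (A::real^'n^'m) *v w))"
  by (intro closed_subspace linear_subspace_image matrix_vector_mul_linear subspace_UNIV)

lemma AE_gaussian_range:
  "AE v in gaussian (G::real^'n^'n). v \<in> range (\<lambda>w. (SOME A :: real^'n^'n. A ** transpose A = G) *v w)"
proof -
  let ?A = "SOME A :: real^'n^'n. A ** transpose A = G"
  have "{v \<in> space borel. v \<in> range (\<lambda>w. ?A *v w)} \<in> sets borel"
    using range_closed_mat[of ?A] by (simp add: borel_closed)
  then show ?thesis unfolding gaussian_def
    by (subst AE_distr_iff) auto
qed

lemma gaussian_vec_tail: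
  fixes P :: "nat \<Rightarrow> 's::finite \<Rightarrow> bool \<Rightarrow> 's pmf" and y :: "real^('s \<times> bool)"
  assumes y: "\<And>sa. 0 \<le> y $ sa" and ysum: "(\<Sum>sa\<in>UNIV. y $ sa) = 1" and t: "0 \<le> t"
  shows "measure (gaussian (Gamma_mat P h y)) {v. \<exists>i. t < \<bar>v $ i\<bar>} \<le> real CARD('s) * (2 * exp (- 2 * t\<^sup>2))"
proof -
  interpret prob_space "gaussian (Gamma_mat P h y)" by (rule prob_space_gaussian)
  have "measure (gaussian (Gamma_mat P h y)) {v. \<exists>i. t < \<bar>v $ i\<bar>}
      = measure (gaussian (Gamma_mat P h y)) (\<Union>i\<in>UNIV. {v. t < \<bar>v $ i\<bar>})" by (rule arg_cong[where f="measure _"]) auto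
  also have "\<dots> \<le> (\<Sum>i\<in>UNIV. measure (gaussian (Gamma_mat P h y)) {v. t < \<bar>v $ i\<bar>})"
    by (rule finite_measure_subadditive_finite) auto
  also have "\<dots> \<le> (\<Sum>i\<in>(UNIV::'s set). 2 * exp (- 2 * t\<^sup>2))"
    by (intro sum_mono gaussian_tail t gamma_A_props(2)[OF y ysum])
  finally show ?thesis by simp
qed


definition Amat :: "(nat \<Rightarrow> 's::finite \<Rightarrow> bool \<Rightarrow> 's pmf) \<Rightarrow> (nat \<Rightarrow> real^('s \<times> bool)) \<Rightarrow> nat \<Rightarrow> real^'s^'s" where
  "Amat P ys h = (SOME A :: real^'s^'s. A ** transpose A = Gamma_mat P h (ys h))"

lemma gtraj_simplex:
  assumes "xini \<in> prob_simplex"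
  shows "gtraj P N \<pi> xini \<omega> h \<in> prob_simplex"
proof (cases h)
  case (Suc k)
  show ?thesis
  proof (cases k)
    case 0 then show ?thesis using Suc assms by simp
  next
    case (Suc m)
    have ne: "(prob_simplex :: (real^'a) set) \<noteq> {}" using assms by auto
    show ?thesis using \<open>h = Suc k\<close> Suc proj_simplex_in[OF ne] by simp
  qed
qed (use assms in simp)

lemma gtraj_Suc:
  "1 \<le> h \<Longrightarrow> gtraj P N \<pi> xini \<omega> (Suc h) =
     proj_simplex (phi P h (\<pi> (gtraj P N \<pi> xini \<omega> h) h) + (1 / sqrt (real N)) *\<^sub>R \<omega> h)"
  by simp

lemma gtraj_good:
  fixes P :: "nat \<Rightarrow> 's::finite \<Rightarrow> bool \<Rightarrow> 's pmf"
  assumes Pi: "in_Pi_delta prob_simplex H \<kappa> z \<delta> xs ys pi0 \<pi>" and xini: "xini \<in> prob_simplex"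
    and xs1: "xs 1 = xini" and \<delta>: "0 \<le> \<delta>" and z: "\<And>h. 0 \<le> z h"
    and zS: "\<And>h. h \<in> {1..<H} \<Longrightarrow> z (Suc h) = sqrt (real CARD('s)) * (\<kappa> * lip P h * z h + 1)"
    and xsS: "\<And>h. h \<in> {1..<H} \<Longrightarrow> xs (Suc h) = phi P h (ys h)"
    and xsimp: "\<And>h. h \<in> {1..H} \<Longrightarrow> xs h \<in> prob_simplex"
  shows "h \<in> {1..H} \<Longrightarrow> (\<forall>h'\<in>{1..<h}. linf ((1 / sqrt (real N)) *\<^sub>R \<omega> h') \<le> \<delta>)
     \<Longrightarrow> linf (gtraj P N \<pi> xini \<omega> h - xs h) \<le> z h * \<delta>"
proof (induction h)
  case 0 then show ?case by simp
next
  case (Suc h)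
  show ?case
  proof (cases "h = 0")
    case True
    then show ?thesis using xs1 z[of 1] \<delta> by simp
  next
    case False
    then have h: "h \<in> {1..<H}" "h \<in> {1..H}" "1 \<le> h" using Suc.prems by auto
    have IH: "linf (gtraj P N \<pi> xini \<omega> h - xs h) \<le> z h * \<delta>" using Suc.IH h Suc.prems by auto
    have w: "linf ((1 / sqrt (real N)) *\<^sub>R \<omega> h) \<le> \<delta>" using Suc.prems h by auto
    have "linf (gtraj P N \<pi> xini \<omega> (Suc h) - xs (Suc h))
        \<le> sqrt (real CARD('s)) * (\<kappa> * lip P h * z h + 1) * \<delta>"
      unfolding gtraj_Suc[OF h(3)]
      by (rule stepG[OF Pi gtraj_simplex[OF xini] h(1) IH xsS[OF h(1)] w xsimp]) (use Suc.prems in auto)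
    then show ?thesis using zS[OF h(1)] by simp
  qed
qed

lemma phi_measurable[measurable]: "phi P h \<in> borel_measurable borel"
  unfolding phi_def by (intro borel_measurable_continuous_onI continuous_intros)

lemma linf_measurable[measurable]: "(linf :: real^'n \<Rightarrow> real) \<in> borel_measurable borel"
  unfolding linf_def by (rule borel_measurable_Max) auto

lemma gnoise_component_measurable:
  assumes "h \<in> {1..<H}"
  shows "(\<lambda>\<omega>. \<omega> h) \<in> borel_measurable (gnoise_space P H ys)"
proof -
  have "(\<lambda>\<omega>. \<omega> h) \<in> measurable (gnoise_space P H ys) (gaussian (Gamma_mat P h (ys h)))"
    unfolding gnoise_space_def using assms by (rule measurable_component_singleton)
  then show ?thesis by (subst (asm) measurable_cong_sets[OF refl sets_gaussian])
qed

lemma gtraj_measurable: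
  fixes P :: "nat \<Rightarrow> 's::finite \<Rightarrow> bool \<Rightarrow> 's pmf"
  assumes \<pi>: "\<And>h. (\<lambda>x. \<pi> x h) \<in> borel_measurable borel" and xini: "xini \<in> prob_simplex"
  shows "h \<le> H \<Longrightarrow> (\<lambda>\<omega>. gtraj P N \<pi> xini \<omega> h) \<in> borel_measurable (gnoise_space P H ys)"
proof (induction h)
  case 0 then show ?case by simp
next
  case (Suc h)
  show ?case
  proof (cases "h = 0")
    case True then show ?thesis by simp
  next
    case False
    then have h: "h \<in> {1..<H}" "1 \<le> h" using Suc.prems by auto
    have ne: "(prob_simplex :: (real^'s) set) \<noteq> {}" using xini by auto
    have [measurable]: "proj_simplex \<in> borel_measurable (borel :: (real^'s) measure)"
      by (rule borel_measurable_continuous_onI[OF continuous_proj_simplex[OF ne]])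
    have [measurable]: "(\<lambda>\<omega>. \<omega> h) \<in> borel_measurable (gnoise_space P H ys)"
      by (rule gnoise_component_measurable[OF h(1)])
    have [measurable]: "(\<lambda>\<omega>. gtraj P N \<pi> xini \<omega> h) \<in> borel_measurable (gnoise_space P H ys)"
      using Suc by simp
    have m1: "(\<lambda>\<omega>. \<pi> (gtraj P N \<pi> xini \<omega> h) h) \<in> borel_measurable (gnoise_space P H ys)"
      by (rule measurable_compose[OF _ \<pi>]) simp
    have m2: "(\<lambda>\<omega>. phi P h (\<pi> (gtraj P N \<pi> xini \<omega> h) h)) \<in> borel_measurable (gnoise_space P H ys)"
      by (rule measurable_compose[OF m1 phi_measurable])
    have m3: "(\<lambda>\<omega>. phi P h (\<pi> (gtraj P N \<pi> xini \<omega> h) h) + (1 / sqrt (real N)) *\<^sub>R \<omega> h)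
        \<in> borel_measurable (gnoise_space P H ys)"
      by (intro borel_measurable_add m2 borel_measurable_scaleR borel_measurable_const) simp
    show ?thesis unfolding gtraj_Suc[OF h(2)]
      by (rule measurable_compose[OF m3]) simp
  qed
qed

lemma prob_space_gnoise: "prob_space (gnoise_space P H ys)"
  unfolding gnoise_space_def by (intro prob_space_PiM prob_space_gaussian)

lemma noise_bad_prob:
  fixes P :: "nat \<Rightarrow> 's::finite \<Rightarrow> bool \<Rightarrow> 's pmf"
  assumes N: "1 \<le> N" and h: "h \<in> {1..<H}"
    and y: "\<And>sa. 0 \<le> ys h $ sa" and ysum: "(\<Sum>sa\<in>UNIV. ys h $ sa) = 1"
  shows "measure (gnoise_space P H ys)
     {\<omega> \<in> space (gnoise_space P H ys). \<not> linf ((1 / sqrt (real N)) *\<^sub>R \<omega> h) \<le> delta_N N}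
     \<le> real CARD('s) * (2 * exp (- 8 * (ln (real N))\<^sup>2))"
proof -
  interpret G: prob_space "gaussian (Gamma_mat P i (ys i))" for i by (rule prob_space_gaussian)
  interpret product_prob_space "\<lambda>h. gaussian (Gamma_mat P h (ys h))" "{1..<H}"
    by unfold_locales
  let ?B = "{v::real^'s. \<exists>i. 2 * ln (real N) < \<bar>v $ i\<bar>}"
  have eq: "\<not> linf ((1 / sqrt (real N)) *\<^sub>R v) \<le> delta_N N \<longleftrightarrow> v \<in> ?B" for v :: "real^'s"
  proof -
    have sN: "0 < sqrt (real N)" using N by simp
    have "linf ((1 / sqrt (real N)) *\<^sub>R v) \<le> delta_N N \<longleftrightarrow> linf v \<le> 2 * ln (real N)"
      using sN by (simp add: linf_scale delta_N_def divide_le_cancel)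
    then show ?thesis by (auto simp: linf_le_iff not_le)
  qed
  have Bset: "?B \<in> sets borel"
  proof -
    have "?B = (\<Union>i. {v::real^'s. 2 * ln (real N) < \<bar>v $ i\<bar>})" by auto
    moreover have "open {v::real^'s. 2 * ln (real N) < \<bar>v $ i\<bar>}" for i
      by (intro open_Collect_less continuous_intros)
    ultimately have "open ?B" by auto
    then show ?thesis by (rule borel_open)
  qed
  have "emeasure (gnoise_space P H ys)
     {\<omega> \<in> space (gnoise_space P H ys). \<not> linf ((1 / sqrt (real N)) *\<^sub>R \<omega> h) \<le> delta_N N}
     = emeasure (gnoise_space P H ys) {\<omega> \<in> space (gnoise_space P H ys). \<omega> h \<in> ?B}"
    by (simp only: eq)
  also have "\<dots> = emeasure (gaussian (Gamma_mat P h (ys h))) ?B"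
    unfolding gnoise_space_def by (rule emeasure_PiM_Collect_single[OF h]) (use Bset in simp)
  finally have "measure (gnoise_space P H ys)
     {\<omega> \<in> space (gnoise_space P H ys). \<not> linf ((1 / sqrt (real N)) *\<^sub>R \<omega> h) \<le> delta_N N}
     = measure (gaussian (Gamma_mat P h (ys h))) ?B"
    by (simp add: measure_def)
  also have "\<dots> \<le> real CARD('s) * (2 * exp (- 2 * (2 * ln (real N))\<^sup>2))"
    by (rule gaussian_vec_tail[OF y ysum]) (use N in simp)
  also have "- 2 * (2 * ln (real N))\<^sup>2 = - 8 * (ln (real N))\<^sup>2" by (simp add: power2_eq_square)
  finally show ?thesis .
qed

lemma AE_gnoise_range:
  "AE \<omega> in gnoise_space P H ys. \<forall>h\<in>{1..<H}. \<omega> h \<in> range (\<lambda>w. Amat P ys h *v w)"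
proof (rule AE_finite_allI)
  fix h assume h: "h \<in> {1..<H}"
  show "AE \<omega> in gnoise_space P H ys. \<omega> h \<in> range (\<lambda>w. Amat P ys h *v w)"
    unfolding gnoise_space_def Amat_def
    by (rule AE_PiM_component[OF prob_space_gaussian h AE_gaussian_range])
qed simp


lemma tailb: "1 \<le> N \<Longrightarrow> exp (- 8 * (ln (real N))\<^sup>2) \<le> 1 / real N powr ln (real N)"
proof -
  assume N: "1 \<le> N"
  then have "real N powr ln (real N) = exp (ln (real N) * ln (real N))" by (simp add: powr_def)
  then have "1 / real N powr ln (real N) = exp (- (ln (real N))\<^sup>2)"
    by (simp add: exp_minus power2_eq_square field_simps)
  moreover have "- 8 * (ln (real N))\<^sup>2 \<le> - (ln (real N))\<^sup>2" by simp
  ultimately show ?thesis by simp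
qed

lemma twoNdelta: "1 \<le> N \<Longrightarrow> exp (- 2 * real N * (delta_N N)\<^sup>2) = exp (- 8 * (ln (real N))\<^sup>2)"
  by (simp add: delta_N_def power_divide power2_eq_square)

context
  fixes P :: "nat \<Rightarrow> 's::finite \<Rightarrow> bool \<Rightarrow> 's pmf" and \<alpha> :: real and H :: nat and xini :: "real^'s"
    and xs :: "nat \<Rightarrow> real^'s" and ys :: "nat \<Rightarrow> real^('s \<times> bool)" and \<kappa> :: real and z :: "nat \<Rightarrow> real"
  assumes H: "1 \<le> H" and xini: "xini \<in> prob_simplex" and feas: "lp_feasible P \<alpha> H xini xs ys"
    and \<kappa>: "0 \<le> \<kappa>" and z: "\<And>h. 0 \<le> z h"
    and zS: "\<And>h. h \<in> {1..<H} \<Longrightarrow> z (Suc h) = sqrt (real CARD('s)) * (\<kappa> * lip P h * z h + 1)"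
begin

lemma xs1: "xs 1 = xini" using feas by (simp add: lp_feasible_def)
lemma xsimp: "h \<in> {1..H} \<Longrightarrow> xs h \<in> prob_simplex" using xs_simplex[OF feas xini] .
lemma xsS: "h \<in> {1..<H} \<Longrightarrow> xs (Suc h) = phi P h (ys h)" using xs_next[OF feas] .

lemma part1:
  fixes pi0 :: "nat \<Rightarrow> real^'s \<Rightarrow> nat \<Rightarrow> real^('s \<times> bool)"
  assumes N: "1 \<le> N" and xiniN: "xini \<in> simplexN N" and adm: "admissible_N \<alpha> H N \<pi>"
    and Pi: "in_Pi_delta (simplexN N) H \<kappa> z (delta_N N) xs ys (pi0 N) \<pi>"
  shows "measure_pmf.prob (ntraj P N \<pi> xini (H - 1)) {X. \<forall>h\<in>{1..H}. linf (X h - xs h) \<le> z h * delta_N N}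
     \<ge> 1 - (2 * real H * real CARD('s)) / real N powr ln (real N)"
proof -
  let ?G = "{X. \<forall>h\<in>{1..H}. linf (X h - xs h) \<le> z h * delta_N N}"
  let ?M = "ntraj P N \<pi> xini (H - 1)"
  let ?\<epsilon> = "real CARD('s) * (2 * exp (- 2 * real N * (delta_N N)\<^sup>2))"
  have SH: "Suc (H - 1) = H" using H by simp
  have "emeasure (measure_pmf ?M) {X. \<not> (\<forall>h\<in>{1..Suc (H - 1)}. linf (X h - xs h) \<le> z h * delta_N N)}
      \<le> ennreal (real (H - 1) * ?\<epsilon>)"
    by (rule ntraj_bad[OF N adm xiniN Pi delta_N_nonneg[OF N] \<kappa> z zS xsS xs1]) (use H in auto)
  then have "measure_pmf.prob ?M (UNIV - ?G) \<le> real (H - 1) * ?\<epsilon>"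
    unfolding SH by (simp add: measure_pmf.emeasure_eq_measure Collect_neg_eq[symmetric] Compl_eq_Diff_UNIV[symmetric])
  moreover have "measure_pmf.prob ?M (UNIV - ?G) = 1 - measure_pmf.prob ?M ?G"
    using measure_pmf.prob_compl[of ?G ?M] by simp
  moreover have "real (H - 1) * ?\<epsilon> \<le> (2 * real H * real CARD('s)) / real N powr ln (real N)"
  proof -
    have "real (H - 1) * ?\<epsilon> = real (H - 1) * real CARD('s) * 2 * exp (- 8 * (ln (real N))\<^sup>2)"
      using twoNdelta[OF N] by simp
    also have "\<dots> \<le> real H * real CARD('s) * 2 * (1 / real N powr ln (real N))"
      by (intro mult_mono tailb N) auto
    also have "\<dots> = (2 * real H * real CARD('s)) / real N powr ln (real N)" by simp
    finally show ?thesis .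
  qed
  ultimately show ?thesis by linarith
qed


context
  fixes N :: nat and \<pi> :: "real^'s \<Rightarrow> nat \<Rightarrow> real^('s \<times> bool)" and pi0 :: "real^'s \<Rightarrow> nat \<Rightarrow> real^('s \<times> bool)"
  assumes N: "1 \<le> N" and adm: "admissible_G \<alpha> H \<pi>"
    and Pi: "in_Pi_delta prob_simplex H \<kappa> z (delta_N N) xs ys pi0 \<pi>"
begin

lemma G_traj_meas: "h \<le> H \<Longrightarrow> (\<lambda>\<omega>. gtraj P N \<pi> xini \<omega> h) \<in> borel_measurable (gnoise_space P H ys)"
  by (rule gtraj_measurable) (use adm xini in \<open>auto simp: admissible_G_def\<close>)

lemma G_v_meas:
  assumes h: "h \<in> {1..<H}"
  shows "(\<lambda>\<omega>. phi P h (\<pi> (gtraj P N \<pi> xini \<omega> h) h) + (1 / sqrt (real N)) *\<^sub>R \<omega> h) \<in> borel_measurable (gnoise_space P H ys)"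
proof -
  have m1: "(\<lambda>\<omega>. \<pi> (gtraj P N \<pi> xini \<omega> h) h) \<in> borel_measurable (gnoise_space P H ys)"
    by (rule measurable_compose[OF G_traj_meas]) (use h adm in \<open>auto simp: admissible_G_def\<close>)
  have m2: "(\<lambda>\<omega>. phi P h (\<pi> (gtraj P N \<pi> xini \<omega> h) h)) \<in> borel_measurable (gnoise_space P H ys)"
    by (rule measurable_compose[OF m1 phi_measurable])
  show ?thesis
    by (intro borel_measurable_add m2 borel_measurable_scaleR borel_measurable_const gnoise_component_measurable h)
qed

lemma G_Qset: "h \<le> H \<Longrightarrow> {\<omega> \<in> space (gnoise_space P H ys). linf (gtraj P N \<pi> xini \<omega> h - xs h) \<le> c}
    \<in> sets (gnoise_space P H ys)"
  by (rule borel_measurable_le)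
     (auto intro!: measurable_compose[OF _ linf_measurable] borel_measurable_diff G_traj_meas)

lemma G_Badset: "h \<in> {1..<H} \<Longrightarrow> {\<omega> \<in> space (gnoise_space P H ys). \<not> linf ((1 / sqrt (real N)) *\<^sub>R \<omega> h) \<le> delta_N N}
    \<in> sets (gnoise_space P H ys)"
  by (rule sets.sets_Collect_neg, rule borel_measurable_le)
     (auto intro!: measurable_compose[OF _ linf_measurable] borel_measurable_scaleR gnoise_component_measurable)

definition "epsG = real CARD('s) * (2 * exp (- 8 * (ln (real N))\<^sup>2))"

lemma epsG_nonneg: "0 \<le> epsG" by (simp add: epsG_def)

lemma epsG_eq: "epsG = real CARD('s) * (2 * exp (- 8 * (ln (real N))\<^sup>2))" by (simp add: epsG_def)

lemma G_BadAll:
  "measure (gnoise_space P H ys) {\<omega> \<in> space (gnoise_space P H ys). \<exists>h'\<in>{1..<H}. \<not> linf ((1 / sqrt (real N)) *\<^sub>R \<omega> h') \<le> delta_N N}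
    \<le> real (H - 1) * epsG"
proof -
  interpret M: prob_space "gnoise_space P H ys" by (rule prob_space_gnoise)
  have "{\<omega> \<in> space (gnoise_space P H ys). \<exists>h'\<in>{1..<H}. \<not> linf ((1 / sqrt (real N)) *\<^sub>R \<omega> h') \<le> delta_N N}
     = (\<Union>h'\<in>{1..<H}. {\<omega> \<in> space (gnoise_space P H ys). \<not> linf ((1 / sqrt (real N)) *\<^sub>R \<omega> h') \<le> delta_N N})"
    by auto
  then have "measure (gnoise_space P H ys) {\<omega> \<in> space (gnoise_space P H ys). \<exists>h'\<in>{1..<H}. \<not> linf ((1 / sqrt (real N)) *\<^sub>R \<omega> h') \<le> delta_N N}
     \<le> (\<Sum>h'\<in>{1..<H}. measure (gnoise_space P H ys) {\<omega> \<in> space (gnoise_space P H ys). \<not> linf ((1 / sqrt (real N)) *\<^sub>R \<omega> h') \<le> delta_N N})"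
    using G_Badset by (simp add: M.finite_measure_subadditive_finite image_subset_iff)
  also have "\<dots> \<le> (\<Sum>h'\<in>{1..<H}. epsG)"
    unfolding epsG_def
    by (intro sum_mono noise_bad_prob N) (auto intro: ys_nonneg[OF feas] ys_sum[OF feas xini])
  finally show ?thesis by simp
qed

lemma G_good:
  "h \<in> {1..H} \<Longrightarrow> (\<forall>h'\<in>{1..<H}. linf ((1 / sqrt (real N)) *\<^sub>R \<omega> h') \<le> delta_N N)
     \<Longrightarrow> linf (gtraj P N \<pi> xini \<omega> h - xs h) \<le> z h * delta_N N"
  by (rule gtraj_good[OF Pi xini xs1 delta_N_nonneg[OF N] z zS xsS xsimp]) auto

lemma G_all:
  "measure (gnoise_space P H ys) {\<omega> \<in> space (gnoise_space P H ys). \<forall>h\<in>{1..H}. linf (gtraj P N \<pi> xini \<omega> h - xs h) \<le> z h * delta_N N}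
    \<ge> 1 - real (H - 1) * epsG"
proof -
  interpret M: prob_space "gnoise_space P H ys" by (rule prob_space_gnoise)
  let ?B = "{\<omega> \<in> space (gnoise_space P H ys). \<exists>h'\<in>{1..<H}. \<not> linf ((1 / sqrt (real N)) *\<^sub>R \<omega> h') \<le> delta_N N}"
  have Bs: "?B \<in> sets (gnoise_space P H ys)"
    by (rule sets.sets_Collect_finite_Ex) (auto intro: G_Badset)
  have As: "{\<omega> \<in> space (gnoise_space P H ys). \<forall>h\<in>{1..H}. linf (gtraj P N \<pi> xini \<omega> h - xs h) \<le> z h * delta_N N}
      \<in> sets (gnoise_space P H ys)"
    by (rule sets.sets_Collect_finite_All) (auto intro: G_Qset)
  have "1 - real (H - 1) * epsG \<le> 1 - measure (gnoise_space P H ys) ?B" using G_BadAll by simp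
  also have "\<dots> = measure (gnoise_space P H ys) (space (gnoise_space P H ys) - ?B)"
    using M.prob_compl[OF Bs] by simp
  also have "\<dots> \<le> measure (gnoise_space P H ys) {\<omega> \<in> space (gnoise_space P H ys). \<forall>h\<in>{1..H}. linf (gtraj P N \<pi> xini \<omega> h - xs h) \<le> z h * delta_N N}"
    by (intro M.finite_measure_mono As) (auto intro: G_good)
  finally show ?thesis .
qed

lemma G_Q:
  assumes h: "h \<in> {1..H}"
  shows "measure (gnoise_space P H ys) {\<omega> \<in> space (gnoise_space P H ys). linf (gtraj P N \<pi> xini \<omega> h - xs h) \<le> z h * delta_N N}
    \<ge> 1 - real (H - 1) * epsG"
proof -
  interpret M: prob_space "gnoise_space P H ys" by (rule prob_space_gnoise)
  have "1 - real (H - 1) * epsG \<le> measure (gnoise_space P H ys) {\<omega> \<in> space (gnoise_space P H ys). \<forall>h\<in>{1..H}. linf (gtraj P N \<pi> xini \<omega> h - xs h) \<le> z h * delta_N N}"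
    by (rule G_all)
  also have "\<dots> \<le> measure (gnoise_space P H ys) {\<omega> \<in> space (gnoise_space P H ys). linf (gtraj P N \<pi> xini \<omega> h - xs h) \<le> z h * delta_N N}"
    by (intro M.finite_measure_mono G_Qset) (use h in auto)
  finally show ?thesis .
qed


lemma G_sum_zero:
  assumes h: "h \<in> {1..<H}" and r: "\<omega> h \<in> range (\<lambda>w. Amat P ys h *v w)"
  shows "(\<Sum>i\<in>UNIV. \<omega> h $ i) = 0"
proof -
  from r obtain w where w: "\<omega> h = Amat P ys h *v w" by auto
  have hH: "h \<in> {1..H}" using h by auto
  show ?thesis unfolding w Amat_def
    by (rule gamma_A_props(3)[OF ys_nonneg[OF feas hH] ys_sum[OF feas xini hH]])
qed

lemma G_Y:
  assumes h: "h \<in> {1..<H}"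
  shows "feasible_action \<alpha> (gtraj P N \<pi> xini \<omega> h) (\<pi> (gtraj P N \<pi> xini \<omega> h) h)"
  using adm h gtraj_simplex[OF xini] unfolding admissible_G_def by auto

lemma G_eq:
  assumes h: "h \<in> {1..<H}"
  shows "cond_prob (gnoise_space P H ys)
           (\<lambda>\<omega>. gtraj P N \<pi> xini \<omega> (Suc h) = phi P h (\<pi> (gtraj P N \<pi> xini \<omega> h) h) + (1 / sqrt (real N)) *\<^sub>R \<omega> h)
           (\<lambda>\<omega>. linf (gtraj P N \<pi> xini \<omega> h - xs h) \<le> z h * delta_N N)
       = cond_prob (gnoise_space P H ys)
           (\<lambda>\<omega>. \<forall>i. 0 \<le> (phi P h (\<pi> (gtraj P N \<pi> xini \<omega> h) h) + (1 / sqrt (real N)) *\<^sub>R \<omega> h) $ i)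
           (\<lambda>\<omega>. linf (gtraj P N \<pi> xini \<omega> h - xs h) \<le> z h * delta_N N)"
proof -
  interpret M: prob_space "gnoise_space P H ys" by (rule prob_space_gnoise)
  have ne: "(prob_simplex :: (real^'s) set) \<noteq> {}" using xini by auto
  have h1: "1 \<le> h" "Suc h \<le> H" "h \<le> H" using h by auto
  let ?v = "\<lambda>\<omega>. phi P h (\<pi> (gtraj P N \<pi> xini \<omega> h) h) + (1 / sqrt (real N)) *\<^sub>R \<omega> h"
  have vm: "?v \<in> borel_measurable (gnoise_space P H ys)" by (rule G_v_meas[OF h])
  have AE: "AE \<omega> in gnoise_space P H ys. (linf (gtraj P N \<pi> xini \<omega> h - xs h) \<le> z h * delta_N N) \<longrightarrow>
      (gtraj P N \<pi> xini \<omega> (Suc h) = ?v \<omega>) = (\<forall>i. 0 \<le> ?v \<omega> $ i)"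
  proof (rule eventually_mono[OF AE_gnoise_range], intro impI)
    fix \<omega> assume "\<forall>h\<in>{1..<H}. \<omega> h \<in> range (\<lambda>w. Amat P ys h *v w)"
    then have s0: "(\<Sum>i\<in>UNIV. \<omega> h $ i) = 0" using G_sum_zero[OF h] h by auto
    have s1: "(\<Sum>sa\<in>UNIV. \<pi> (gtraj P N \<pi> xini \<omega> h) h $ sa) = 1"
      by (rule feasible_sum[OF G_Y[OF h] gtraj_simplex[OF xini]])
    have sv: "(\<Sum>i\<in>UNIV. ?v \<omega> $ i) = 1"
      using s0 s1 by (simp add: sum.distrib phi_sum sum_divide_distrib[symmetric])
    have "(gtraj P N \<pi> xini \<omega> (Suc h) = ?v \<omega>) \<longleftrightarrow> ?v \<omega> \<in> prob_simplex"
      unfolding gtraj_Suc[OF h1(1)] by (rule proj_simplex_eq_iff[OF ne])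
    also have "\<dots> \<longleftrightarrow> (\<forall>i. 0 \<le> ?v \<omega> $ i)" using sv by (simp add: prob_simplex_def)
    finally show "(gtraj P N \<pi> xini \<omega> (Suc h) = ?v \<omega>) = (\<forall>i. 0 \<le> ?v \<omega> $ i)" .
  qed
  have E1: "{\<omega> \<in> space (gnoise_space P H ys). gtraj P N \<pi> xini \<omega> (Suc h) = ?v \<omega>} \<in> sets (gnoise_space P H ys)"
    by (rule measurable_equality_set[OF G_traj_meas[OF h1(2)] vm])
  have E2: "{\<omega> \<in> space (gnoise_space P H ys). \<forall>i. 0 \<le> ?v \<omega> $ i} \<in> sets (gnoise_space P H ys)"
  proof -
    have "{\<omega> \<in> space (gnoise_space P H ys). \<forall>i\<in>UNIV. 0 \<le> ?v \<omega> $ i} \<in> sets (gnoise_space P H ys)"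
    proof (rule sets.sets_Collect_finite_All)
      fix i :: 's
      show "{\<omega> \<in> space (gnoise_space P H ys). 0 \<le> ?v \<omega> $ i} \<in> sets (gnoise_space P H ys)"
        by (rule borel_measurable_le, rule borel_measurable_const, rule measurable_compose[OF vm borel_measurable_vec_nth])
    qed simp
    then show ?thesis by simp
  qed
  show ?thesis
    by (rule M.cond_prob_eq_AE[OF AE E1 E2]) (auto intro: G_Qset h1)
qed

lemma G_pos:
  assumes h: "h \<in> {1..<H}"
    and thr: "\<forall>i. 0 < xs (Suc h) $ i \<longrightarrow> (lip P h * \<kappa> * z h + 1) * delta_N N \<le> xs (Suc h) $ i"
    and Q: "linf (gtraj P N \<pi> xini \<omega> h - xs h) \<le> z h * delta_N N"
    and nb: "linf ((1 / sqrt (real N)) *\<^sub>R \<omega> h) \<le> delta_N N"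
    and r: "\<omega> h \<in> range (\<lambda>w. Amat P ys h *v w)"
  shows "0 \<le> (phi P h (\<pi> (gtraj P N \<pi> xini \<omega> h) h) + (1 / sqrt (real N)) *\<^sub>R \<omega> h) $ i"
proof -
  let ?X = "gtraj P N \<pi> xini \<omega> h"
  let ?Y = "\<pi> ?X h"
  have hH: "h \<in> {1..H}" "Suc h \<in> {1..H}" using h by auto
  have Y0: "\<forall>sa. 0 \<le> ?Y $ sa" using G_Y[OF h] by (simp add: feasible_action_def)
  have xs0: "0 \<le> xs (Suc h) $ i" using xsimp[OF hH(2)] by (simp add: prob_simplex_def)
  show ?thesis
  proof (cases "xs (Suc h) $ i = 0")
    case True
    then have "phi P h (ys h) $ i = 0" using xsS[OF h] by simp
    then have Ai: "Amat P ys h $ i = 0" unfolding Amat_def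
      by (rule gamma_A_props(4)[OF ys_nonneg[OF feas hH(1)] ys_sum[OF feas xini hH(1)]])
    from r obtain w where w: "\<omega> h = Amat P ys h *v w" by auto
    have "\<omega> h $ i = 0" unfolding w using Ai by (simp add: matrix_vector_mult_def)
    then show ?thesis using phi_nonneg[OF Y0] by simp
  next
    case False
    then have pos: "0 < xs (Suc h) $ i" using xs0 by simp
    have d: "linf (phi P h ?Y - xs (Suc h)) \<le> lip P h * (\<kappa> * z h * delta_N N)"
      by (rule step_phi[OF Pi gtraj_simplex[OF xini] h Q xsS[OF h]])
    have a: "xs (Suc h) $ i - lip P h * (\<kappa> * z h * delta_N N) \<le> phi P h ?Y $ i"
      using abs_le_linf[of "phi P h ?Y - xs (Suc h)" i] d by simp
    have b: "- delta_N N \<le> ((1 / sqrt (real N)) *\<^sub>R \<omega> h) $ i"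
      using abs_le_linf[of "(1 / sqrt (real N)) *\<^sub>R \<omega> h" i] nb by linarith
    have "(lip P h * \<kappa> * z h + 1) * delta_N N \<le> xs (Suc h) $ i" using thr pos by auto
    then show ?thesis using a b by (simp add: algebra_simps)
  qed
qed

lemma G_cond:
  assumes h: "h \<in> {1..<H}"
    and thr: "\<forall>i. 0 < xs (Suc h) $ i \<longrightarrow> (lip P h * \<kappa> * z h + 1) * delta_N N \<le> xs (Suc h) $ i"
    and small: "real H * epsG \<le> 1 / 2"
  shows "cond_prob (gnoise_space P H ys)
           (\<lambda>\<omega>. \<forall>i. 0 \<le> (phi P h (\<pi> (gtraj P N \<pi> xini \<omega> h) h) + (1 / sqrt (real N)) *\<^sub>R \<omega> h) $ i)
           (\<lambda>\<omega>. linf (gtraj P N \<pi> xini \<omega> h - xs h) \<le> z h * delta_N N)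
      \<ge> 1 - 2 * epsG"
proof -
  interpret M: prob_space "gnoise_space P H ys" by (rule prob_space_gnoise)
  let ?M = "gnoise_space P H ys"
  let ?v = "\<lambda>\<omega>. phi P h (\<pi> (gtraj P N \<pi> xini \<omega> h) h) + (1 / sqrt (real N)) *\<^sub>R \<omega> h"
  let ?Q = "{\<omega> \<in> space ?M. linf (gtraj P N \<pi> xini \<omega> h - xs h) \<le> z h * delta_N N}"
  let ?EQ = "{\<omega> \<in> space ?M. (\<forall>i. 0 \<le> ?v \<omega> $ i) \<and> linf (gtraj P N \<pi> xini \<omega> h - xs h) \<le> z h * delta_N N}"
  let ?B = "{\<omega> \<in> space ?M. \<not> linf ((1 / sqrt (real N)) *\<^sub>R \<omega> h) \<le> delta_N N}"
  have h1: "1 \<le> h" "Suc h \<le> H" "h \<le> H" "h \<in> {1..H}" using h by auto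
  have vm: "?v \<in> borel_measurable ?M" by (rule G_v_meas[OF h])
  have Qs: "?Q \<in> sets ?M" by (rule G_Qset[OF h1(3)])
  have Bs: "?B \<in> sets ?M" by (rule G_Badset[OF h])
  have EQs: "?EQ \<in> sets ?M"
  proof -
    have "{\<omega> \<in> space ?M. \<forall>i\<in>UNIV. 0 \<le> ?v \<omega> $ i} \<in> sets ?M"
    proof (rule sets.sets_Collect_finite_All)
      fix i :: 's
      show "{\<omega> \<in> space ?M. 0 \<le> ?v \<omega> $ i} \<in> sets ?M"
        by (rule borel_measurable_le, rule borel_measurable_const, rule measurable_compose[OF vm borel_measurable_vec_nth])
    qed simp
    then have "{\<omega> \<in> space ?M. \<forall>i\<in>UNIV. 0 \<le> ?v \<omega> $ i} \<inter> ?Q \<in> sets ?M" using Qs by auto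
    moreover have "?EQ = {\<omega> \<in> space ?M. \<forall>i\<in>UNIV. 0 \<le> ?v \<omega> $ i} \<inter> ?Q" by auto
    ultimately show ?thesis by simp
  qed
  have AE: "AE \<omega> in ?M. \<omega> \<in> ?Q \<longrightarrow> \<omega> \<in> ?EQ \<union> ?B"
  proof (rule eventually_mono[OF AE_gnoise_range], intro impI)
    fix \<omega> assume r: "\<forall>h\<in>{1..<H}. \<omega> h \<in> range (\<lambda>w. Amat P ys h *v w)" and q: "\<omega> \<in> ?Q"
    show "\<omega> \<in> ?EQ \<union> ?B"
    proof (cases "\<omega> \<in> ?B")
      case False
      then have nb: "linf ((1 / sqrt (real N)) *\<^sub>R \<omega> h) \<le> delta_N N" using q by auto
      have qq: "linf (gtraj P N \<pi> xini \<omega> h - xs h) \<le> z h * delta_N N" using q by auto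
      have rr: "\<omega> h \<in> range (\<lambda>w. Amat P ys h *v w)" using r h by auto
      have "\<forall>i. 0 \<le> ?v \<omega> $ i" using G_pos[OF h thr qq nb rr] by auto
      then show ?thesis using q by auto
    qed simp
  qed
  have "emeasure ?M ?Q \<le> emeasure ?M (?EQ \<union> ?B)"
    by (rule emeasure_mono_AE[OF AE]) (use EQs Bs in auto)
  then have "M.prob ?Q \<le> M.prob (?EQ \<union> ?B)" by (simp add: M.emeasure_eq_measure)
  also have "\<dots> \<le> M.prob ?EQ + M.prob ?B" by (rule measure_subadditive[OF EQs Bs]) (auto simp: M.emeasure_eq_measure)
  also have "M.prob ?B \<le> epsG"
    unfolding epsG_def
    by (rule noise_bad_prob[OF N h]) (auto intro: ys_nonneg[OF feas h1(4)] ys_sum[OF feas xini h1(4)])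
  finally have EQ: "M.prob ?Q - epsG \<le> M.prob ?EQ" by simp
  have "1 - real (H - 1) * epsG \<le> M.prob ?Q" by (rule G_Q[OF h1(4)])
  moreover have "real (H - 1) * epsG \<le> real H * epsG" using epsG_nonneg by (intro mult_right_mono) auto
  ultimately have Qh: "1 / 2 \<le> M.prob ?Q" using small by linarith
  have "1 - 2 * epsG \<le> 1 - epsG / M.prob ?Q"
  proof -
    have "epsG / M.prob ?Q \<le> epsG / (1 / 2)"
      using Qh epsG_nonneg by (intro divide_left_mono) auto
    then show ?thesis by simp
  qed
  also have "\<dots> = (M.prob ?Q - epsG) / M.prob ?Q" using Qh by (simp add: field_simps)
  also have "\<dots> \<le> M.prob ?EQ / M.prob ?Q" using Qh EQ by (intro divide_right_mono) auto
  also have "\<dots> = cond_prob ?M (\<lambda>\<omega>. \<forall>i. 0 \<le> ?v \<omega> $ i) (\<lambda>\<omega>. linf (gtraj P N \<pi> xini \<omega> h - xs h) \<le> z h * delta_N N)"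
    by (simp add: cond_prob_def)
  finally show ?thesis .
qed

end

end


lemma delta_N_lim: "(\<lambda>N. delta_N N) \<longlonglongrightarrow> 0"
  unfolding delta_N_def by real_asymp

lemma exp_lim: "(\<lambda>N::nat. exp (- 8 * (ln (real N))\<^sup>2)) \<longlonglongrightarrow> 0"
  by real_asymp

theorem lemma8:
  fixes P :: "nat \<Rightarrow> 's::finite \<Rightarrow> bool \<Rightarrow> 's pmf"
    and r :: "nat \<Rightarrow> 's \<Rightarrow> bool \<Rightarrow> real"
    and \<alpha> :: real and H :: nat and xini :: "real^'s"
    and xs :: "nat \<Rightarrow> real^'s" and ys :: "nat \<Rightarrow> real^('s \<times> bool)"
  assumes H: "1 \<le> H"
    and r_nonneg: "\<forall>h\<in>{1..H}. \<forall>s a. 0 \<le> r h s a"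
    and alpha: "0 < \<alpha>" "\<alpha> < 1"
    and xini: "xini \<in> prob_simplex"
    and opt: "lp_optimal P r \<alpha> H xini xs ys"
  defines "\<kappa> \<equiv> kappa P r \<alpha> H xini ys"
    and "z \<equiv> zcoef P r \<alpha> H xini ys"
    and "goodN \<equiv> \<lambda>N::nat. 1 \<le> N \<and> \<alpha> * real N \<in> \<nat> \<and> xini \<in> simplexN N"
  shows
    \<comment> \<open>(1) the N-system\<close>
    "(\<forall>pi0 :: nat \<Rightarrow> real^'s \<Rightarrow> nat \<Rightarrow> real^('s \<times> bool).
        (\<forall>N. goodN N \<longrightarrow> admissible_N \<alpha> H N (pi0 N)) \<longrightarrow>
        (\<exists>C>0. \<forall>N \<pi>. goodN N \<longrightarrow> admissible_N \<alpha> H N \<pi>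
            \<longrightarrow> in_Pi_delta (simplexN N) H \<kappa> z (delta_N N) xs ys (pi0 N) \<pi>
            \<longrightarrow> measure_pmf.prob (ntraj P N \<pi> xini (H - 1))
                  {X. \<forall>h\<in>{1..H}. linf (X h - xs h) \<le> z h * delta_N N}
                \<ge> 1 - C / real N powr ln (real N)))
     \<and>
    \<comment> \<open>(2) the Gaussian stochastic system\<close>
     (\<forall>pi0 :: real^'s \<Rightarrow> nat \<Rightarrow> real^('s \<times> bool).
        admissible_G \<alpha> H pi0 \<longrightarrow>
        (\<exists>C>0. \<forall>N \<pi>. goodN N \<longrightarrow> admissible_G \<alpha> H \<pi>
            \<longrightarrow> in_Pi_delta prob_simplex H \<kappa> z (delta_N N) xs ys pi0 \<pi>
            \<longrightarrow> (\<forall>h\<in>{1..<H}.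
                   cond_prob (gnoise_space P H ys)
                     (\<lambda>\<omega>. gtraj P N \<pi> xini \<omega> (Suc h)
                            = phi P h (\<pi> (gtraj P N \<pi> xini \<omega> h) h) + (1 / sqrt (real N)) *\<^sub>R \<omega> h)
                     (\<lambda>\<omega>. linf (gtraj P N \<pi> xini \<omega> h - xs h) \<le> z h * delta_N N)
                 = cond_prob (gnoise_space P H ys)
                     (\<lambda>\<omega>. \<forall>i. 0 \<le> (phi P h (\<pi> (gtraj P N \<pi> xini \<omega> h) h)
                                   + (1 / sqrt (real N)) *\<^sub>R \<omega> h) $ i)
                     (\<lambda>\<omega>. linf (gtraj P N \<pi> xini \<omega> h - xs h) \<le> z h * delta_N N)
                 \<and> cond_prob (gnoise_space P H ys)
                     (\<lambda>\<omega>. \<forall>i. 0 \<le> (phi P h (\<pi> (gtraj P N \<pi> xini \<omega> h) h)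
                                   + (1 / sqrt (real N)) *\<^sub>R \<omega> h) $ i)
                     (\<lambda>\<omega>. linf (gtraj P N \<pi> xini \<omega> h - xs h) \<le> z h * delta_N N)
                   \<ge> 1 - C / real N powr ln (real N))
              \<and> measure (gnoise_space P H ys)
                  {\<omega> \<in> space (gnoise_space P H ys).
                     \<forall>h\<in>{1..H}. linf (gtraj P N \<pi> xini \<omega> h - xs h) \<le> z h * delta_N N}
                \<ge> 1 - C / real N powr ln (real N)))"
proof -
  have feas: "lp_feasible P \<alpha> H xini xs ys" using opt by (simp add: lp_optimal_def)
  have \<kappa>0: "0 \<le> \<kappa>" unfolding \<kappa>_def by (rule kappa_nonneg)
  have z0: "\<And>h. 0 \<le> z h" unfolding z_def using zcoef_ge1 order_trans zero_le_one by blast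
  have zS: "\<And>h. h \<in> {1..<H} \<Longrightarrow> z (Suc h) = sqrt (real CARD('s)) * (\<kappa> * lip P h * z h + 1)"
    unfolding z_def \<kappa>_def by (rule zcoef_Suc) auto
  let ?S = "real CARD('s)"
  have Npos: "\<And>N. 1 \<le> N \<Longrightarrow> 0 < real N powr ln (real N)" by simp
  show ?thesis
  proof (intro conjI allI impI)
    fix pi0 :: "nat \<Rightarrow> real^'s \<Rightarrow> nat \<Rightarrow> real^('s \<times> bool)"
    show "\<exists>C>0. \<forall>N \<pi>. goodN N \<longrightarrow> admissible_N \<alpha> H N \<pi>
            \<longrightarrow> in_Pi_delta (simplexN N) H \<kappa> z (delta_N N) xs ys (pi0 N) \<pi>
            \<longrightarrow> measure_pmf.prob (ntraj P N \<pi> xini (H - 1))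
                  {X. \<forall>h\<in>{1..H}. linf (X h - xs h) \<le> z h * delta_N N}
                \<ge> 1 - C / real N powr ln (real N)"
    proof (intro exI[of _ "2 * real H * ?S"] conjI allI impI)
      show "0 < 2 * real H * ?S" using H by simp
      fix N \<pi> assume g: "goodN N" and adm: "admissible_N \<alpha> H N \<pi>"
        and Pi: "in_Pi_delta (simplexN N) H \<kappa> z (delta_N N) xs ys (pi0 N) \<pi>"
      show "measure_pmf.prob (ntraj P N \<pi> xini (H - 1))
                  {X. \<forall>h\<in>{1..H}. linf (X h - xs h) \<le> z h * delta_N N}
                \<ge> 1 - 2 * real H * ?S / real N powr ln (real N)"
      proof -
        have N: "1 \<le> N" and xN: "xini \<in> simplexN N" using g unfolding goodN_def by auto
        show ?thesis using part1[where ?pi0.0=pi0, OF H xini feas \<kappa>0 z0 zS N xN adm Pi] by simp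
      qed
    qed
  next
    fix pi0 :: "real^'s \<Rightarrow> nat \<Rightarrow> real^('s \<times> bool)"
    let ?thr = "\<lambda>N. \<forall>h\<in>{1..<H}. \<forall>i. 0 < xs (Suc h) $ i \<longrightarrow> (lip P h * \<kappa> * z h + 1) * delta_N N \<le> xs (Suc h) $ i"
    have ev1: "eventually ?thr sequentially"
    proof (rule eventually_ball_finite, simp, intro ballI eventually_all_finite allI)
      fix h i
      show "eventually (\<lambda>N. 0 < xs (Suc h) $ i \<longrightarrow> (lip P h * \<kappa> * z h + 1) * delta_N N \<le> xs (Suc h) $ i) sequentially"
      proof (cases "0 < xs (Suc h) $ i")
        case True
        have c: "0 < lip P h * \<kappa> * z h + 1" using lip_nonneg[of P h] \<kappa>0 z0[of h]
          by (metis add_nonneg_pos mult_nonneg_nonneg zero_less_one)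
        have "eventually (\<lambda>N. delta_N N < xs (Suc h) $ i / (lip P h * \<kappa> * z h + 1)) sequentially"
          by (rule order_tendstoD(2)[OF delta_N_lim]) (use True c in simp)
        then show ?thesis
          by (rule eventually_mono) (use c in \<open>simp add: field_simps\<close>)
      qed simp
    qed
    have ev2: "eventually (\<lambda>N. real H * (?S * (2 * exp (- 8 * (ln (real N))\<^sup>2))) < 1 / 2) sequentially"
    proof (rule order_tendstoD(2))
      show "(\<lambda>N. real H * (?S * (2 * exp (- 8 * (ln (real N))\<^sup>2)))) \<longlonglongrightarrow> 0"
        by (intro tendsto_mult_right_zero exp_lim)
    qed simp
    obtain N0 where N0: "\<And>N. N0 \<le> N \<Longrightarrow> ?thr N \<and> real H * (?S * (2 * exp (- 8 * (ln (real N))\<^sup>2))) < 1 / 2"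
      using eventually_conj[OF ev1 ev2] unfolding eventually_sequentially by blast
    define C where "C = 4 * ?S + 2 * real H * ?S + 1 + (\<Sum>N<N0. real N powr ln (real N))"
    have sumnn: "0 \<le> (\<Sum>N<N0. real N powr ln (real N))" by (intro sum_nonneg) simp
    have C1: "4 * ?S + 2 * real H * ?S \<le> C" using sumnn unfolding C_def by simp
    show "\<exists>C>0. \<forall>N \<pi>. goodN N \<longrightarrow> admissible_G \<alpha> H \<pi>
            \<longrightarrow> in_Pi_delta prob_simplex H \<kappa> z (delta_N N) xs ys pi0 \<pi>
            \<longrightarrow> (\<forall>h\<in>{1..<H}.
                   cond_prob (gnoise_space P H ys)
                     (\<lambda>\<omega>. gtraj P N \<pi> xini \<omega> (Suc h)
                            = phi P h (\<pi> (gtraj P N \<pi> xini \<omega> h) h) + (1 / sqrt (real N)) *\<^sub>R \<omega> h)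
                     (\<lambda>\<omega>. linf (gtraj P N \<pi> xini \<omega> h - xs h) \<le> z h * delta_N N)
                 = cond_prob (gnoise_space P H ys)
                     (\<lambda>\<omega>. \<forall>i. 0 \<le> (phi P h (\<pi> (gtraj P N \<pi> xini \<omega> h) h)
                                   + (1 / sqrt (real N)) *\<^sub>R \<omega> h) $ i)
                     (\<lambda>\<omega>. linf (gtraj P N \<pi> xini \<omega> h - xs h) \<le> z h * delta_N N)
                 \<and> cond_prob (gnoise_space P H ys)
                     (\<lambda>\<omega>. \<forall>i. 0 \<le> (phi P h (\<pi> (gtraj P N \<pi> xini \<omega> h) h)
                                   + (1 / sqrt (real N)) *\<^sub>R \<omega> h) $ i)
                     (\<lambda>\<omega>. linf (gtraj P N \<pi> xini \<omega> h - xs h) \<le> z h * delta_N N)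
                   \<ge> 1 - C / real N powr ln (real N))
              \<and> measure (gnoise_space P H ys)
                  {\<omega> \<in> space (gnoise_space P H ys).
                     \<forall>h\<in>{1..H}. linf (gtraj P N \<pi> xini \<omega> h - xs h) \<le> z h * delta_N N}
                \<ge> 1 - C / real N powr ln (real N)"
    proof (intro exI[of _ C] conjI allI impI ballI)
      have "0 \<le> 4 * ?S + 2 * real H * ?S" by simp
      then show "0 < C" using sumnn unfolding C_def by linarith
      fix N \<pi> assume g: "goodN N" and adm: "admissible_G \<alpha> H \<pi>"
        and Pi: "in_Pi_delta prob_simplex H \<kappa> z (delta_N N) xs ys pi0 \<pi>"
      have N: "1 \<le> N" using g unfolding goodN_def by simp
      let ?e = "?S * (2 * exp (- 8 * (ln (real N))\<^sup>2))"
      have e0: "0 \<le> ?e" by simp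
      have eb: "?e \<le> 2 * ?S / real N powr ln (real N)"
      proof -
        have "?e = (2 * ?S) * exp (- 8 * (ln (real N))\<^sup>2)" by simp
        also have "\<dots> \<le> (2 * ?S) * (1 / real N powr ln (real N))"
          by (intro mult_left_mono tailb N) simp
        finally show ?thesis by simp
      qed
      have Cb: "\<And>a. 0 \<le> a \<Longrightarrow> a \<le> 4 * ?S + 2 * real H * ?S \<Longrightarrow> a / real N powr ln (real N) \<le> C / real N powr ln (real N)"
        using C1 Npos[OF N] by (intro divide_right_mono) auto
      fix h assume h: "h \<in> {1..<H}"
      show "cond_prob (gnoise_space P H ys)
                     (\<lambda>\<omega>. gtraj P N \<pi> xini \<omega> (Suc h)
                            = phi P h (\<pi> (gtraj P N \<pi> xini \<omega> h) h) + (1 / sqrt (real N)) *\<^sub>R \<omega> h)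
                     (\<lambda>\<omega>. linf (gtraj P N \<pi> xini \<omega> h - xs h) \<le> z h * delta_N N)
                 = cond_prob (gnoise_space P H ys)
                     (\<lambda>\<omega>. \<forall>i. 0 \<le> (phi P h (\<pi> (gtraj P N \<pi> xini \<omega> h) h)
                                   + (1 / sqrt (real N)) *\<^sub>R \<omega> h) $ i)
                     (\<lambda>\<omega>. linf (gtraj P N \<pi> xini \<omega> h - xs h) \<le> z h * delta_N N)"
        by (rule G_eq[OF H xini feas \<kappa>0 z0 zS N adm Pi h])
      show "cond_prob (gnoise_space P H ys)
                     (\<lambda>\<omega>. \<forall>i. 0 \<le> (phi P h (\<pi> (gtraj P N \<pi> xini \<omega> h) h)
                                   + (1 / sqrt (real N)) *\<^sub>R \<omega> h) $ i)
                     (\<lambda>\<omega>. linf (gtraj P N \<pi> xini \<omega> h - xs h) \<le> z h * delta_N N)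
                   \<ge> 1 - C / real N powr ln (real N)"
      proof (cases "N0 \<le> N")
        case True
        have "1 - 2 * ?e \<le> cond_prob (gnoise_space P H ys)
                     (\<lambda>\<omega>. \<forall>i. 0 \<le> (phi P h (\<pi> (gtraj P N \<pi> xini \<omega> h) h)
                                   + (1 / sqrt (real N)) *\<^sub>R \<omega> h) $ i)
                     (\<lambda>\<omega>. linf (gtraj P N \<pi> xini \<omega> h - xs h) \<le> z h * delta_N N)"
        proof -
          have eq: "epsG TYPE('s) N = ?e" by (rule epsG_eq[OF H xini feas \<kappa>0 z0 zS N adm Pi])
          have thr: "?thr N" and sm: "real H * ?e < 1 / 2" using N0[OF True] by auto
          show ?thesis using G_cond[OF H xini feas \<kappa>0 z0 zS N adm Pi h] thr sm h unfolding eq by auto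
        qed
        moreover have "2 * ?e \<le> C / real N powr ln (real N)"
        proof -
          have "2 * ?e \<le> 4 * ?S / real N powr ln (real N)" using eb by simp
          also have "\<dots> \<le> C / real N powr ln (real N)" by (rule Cb) (use H in auto)
          finally show ?thesis .
        qed
        ultimately show ?thesis by linarith
      next
        case False
        then have "N \<in> {..<N0}" by simp
        then have "real N powr ln (real N) \<le> (\<Sum>N<N0. real N powr ln (real N))"
          by (intro member_le_sum) auto
        moreover have "0 \<le> 4 * ?S + 2 * real H * ?S" by simp
        ultimately have "real N powr ln (real N) \<le> C" unfolding C_def by linarith
        then have "1 \<le> C / real N powr ln (real N)" using Npos[OF N] by simp
        moreover have "0 \<le> cond_prob (gnoise_space P H ys)
                     (\<lambda>\<omega>. \<forall>i. 0 \<le> (phi P h (\<pi> (gtraj P N \<pi> xini \<omega> h) h)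
                                   + (1 / sqrt (real N)) *\<^sub>R \<omega> h) $ i)
                     (\<lambda>\<omega>. linf (gtraj P N \<pi> xini \<omega> h - xs h) \<le> z h * delta_N N)"
          by (simp add: cond_prob_def)
        ultimately show ?thesis by linarith
      qed
    next
      fix N \<pi> assume g: "goodN N" and adm: "admissible_G \<alpha> H \<pi>"
        and Pi: "in_Pi_delta prob_simplex H \<kappa> z (delta_N N) xs ys pi0 \<pi>"
      have N: "1 \<le> N" using g unfolding goodN_def by simp
      let ?e = "?S * (2 * exp (- 8 * (ln (real N))\<^sup>2))"
      have eb: "?e \<le> 2 * ?S / real N powr ln (real N)"
      proof -
        have "?e = (2 * ?S) * exp (- 8 * (ln (real N))\<^sup>2)" by simp
        also have "\<dots> \<le> (2 * ?S) * (1 / real N powr ln (real N))"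
          by (intro mult_left_mono tailb N) simp
        finally show ?thesis by simp
      qed
      have "1 - real (H - 1) * ?e \<le> measure (gnoise_space P H ys)
                  {\<omega> \<in> space (gnoise_space P H ys).
                     \<forall>h\<in>{1..H}. linf (gtraj P N \<pi> xini \<omega> h - xs h) \<le> z h * delta_N N}"
      proof -
        have eq: "epsG TYPE('s) N = ?e" by (rule epsG_eq[OF H xini feas \<kappa>0 z0 zS N adm Pi])
        show ?thesis using G_all[OF H xini feas \<kappa>0 z0 zS N adm Pi] unfolding eq by simp
      qed
      moreover have "real (H - 1) * ?e \<le> C / real N powr ln (real N)"
      proof -
        have "real (H - 1) * ?e \<le> real H * (2 * ?S / real N powr ln (real N))"
          using eb by (intro mult_mono) auto
        also have "\<dots> = (2 * real H * ?S) / real N powr ln (real N)" by simp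
        also have "\<dots> \<le> C / real N powr ln (real N)"
          using C1 Npos[OF N] by (intro divide_right_mono) auto
        finally show ?thesis .
      qed
      ultimately show "measure (gnoise_space P H ys)
                  {\<omega> \<in> space (gnoise_space P H ys).
                     \<forall>h\<in>{1..H}. linf (gtraj P N \<pi> xini \<omega> h - xs h) \<le> z h * delta_N N}
                \<ge> 1 - C / real N powr ln (real N)" by linarith
    qed
  qed
qed


end
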